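(* Let $d\ge1$, $T\in(-\infty,\infty]$, $\alpha\in(0,1]$, and let $u\in L_{2,\mathrm{loc}}(\mathbb{R}^{1+2d}_T)$ satisfy $[u]_{\mathcal{L}^{2,\alpha}_{\mathrm{kin}}(\mathbb{R}^{1+2d}_T)}<\infty$. Then $$N[u]_{C^\alpha_{\mathrm{kin}}(\mathbb{R}^{1+2d}_T)}\le[u]_{\mathcal{L}^{2,\alpha}_{\mathrm{kin}}(\mathbb{R}^{1+2d}_T)}\le N^{-1}[u]_{C^\alpha_{\mathrm{kin}}(\mathbb{R}^{1+2d}_T)},$$ where $N=N(d,\alpha)>0$.
   Context: Notation: $z=(t,x,v)$, $\mathbb{R}^{1+2d}_T=(-\infty,T)\times\mathbb{R}^{2d}$. $\rho(z,z_0)=\max\{|t-t_0|^{1/2},|x-x_0+(t-t_0)v_0|^{1/3},|v-v_0|\}$ and $[u]_{C^\alpha_{\mathrm{kin}}(\mathbb{R}^{1+2d}_T)}=\sup_{z\ne z'}|u(z)-u(z')|/\rho^\alpha(z,z')$ over $z,z'\in\mathbb{R}^{1+2d}_T$. $Q_r(z_0)=\{z:-r^2<t-t_0<0,\ |v-v_0|<r,\ |x-x_0+(t-t_0)v_0|^{1/3}<r\}$. $(f)_A=|A|^{-1}\int_Af$. Kinetic Campanato seminorm: $[u]_{\mathcal{L}^{2,\alpha}_{\mathrm{kin}}(\mathbb{R}^{1+2d}_T)}=\sup_{r>0,\,z_0\in\overline{\mathbb{R}^{1+2d}_T}}r^{-\alpha}\big(\fint_{Q_r(z_0)}|u-(u)_{Q_r(z_0)}|^2\big)^{1/2}$.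 *)

theory Defs
  imports "HOL-Analysis.Analysis"
begin

type_synonym 'd kpoint = "real \<times> (real^'d) \<times> (real^'d)"

definition kdom :: "ereal \<Rightarrow> 'd::finite kpoint set" where
  "kdom T = {z. ereal (fst z) < T}"

definition krho :: "'d::finite kpoint \<Rightarrow> 'd kpoint \<Rightarrow> real" where
  "krho z z0 = (case z of (t, x, v) \<Rightarrow> case z0 of (t0, x0, v0) \<Rightarrow>
     max (sqrt \<bar>t - t0\<bar>) (max (root 3 (norm (x - x0 + (t - t0) *\<^sub>R v0))) (norm (v - v0))))"

definition kcyl :: "real \<Rightarrow> 'd::finite kpoint \<Rightarrow> 'd kpoint set" where
  "kcyl r z0 = (case z0 of (t0, x0, v0) \<Rightarrow>
     {(t, x, v). - (r^2) < t - t0 \<and> t - t0 < 0 \<and> norm (v - v0) < r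
        \<and> root 3 (norm (x - x0 + (t - t0) *\<^sub>R v0)) < r})"

definition avg :: "'a::euclidean_space set \<Rightarrow> ('a \<Rightarrow> real) \<Rightarrow> real" where
  "avg A f = (LINT z:A|lebesgue. f z) / measure lebesgue A"

definition kholder :: "real \<Rightarrow> ereal \<Rightarrow> ('d::finite kpoint \<Rightarrow> real) \<Rightarrow> ennreal" where
  "kholder \<alpha> T u = (SUP p \<in> {(z, z'). z \<in> kdom T \<and> z' \<in> kdom T \<and> z \<noteq> z'}.
       ennreal (\<bar>u (fst p) - u (snd p)\<bar> / (krho (fst p) (snd p)) powr \<alpha>))"

definition kcampanato :: "real \<Rightarrow> ereal \<Rightarrow> ('d::finite kpoint \<Rightarrow> real) \<Rightarrow> ennreal" where
  "kcampanato \<alpha> T u = (SUP p \<in> {(r, z0). r > 0 \<and> z0 \<in> closure (kdom T)}.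
       ennreal (fst p powr (- \<alpha>) *
         sqrt (avg (kcyl (fst p) (snd p)) (\<lambda>z. (u z - avg (kcyl (fst p) (snd p)) u)^2))))"

definition L2loc :: "ereal \<Rightarrow> ('d::finite kpoint \<Rightarrow> real) \<Rightarrow> bool" where
  "L2loc T u \<longleftrightarrow> set_borel_measurable lebesgue (kdom T) u \<and>
     (\<forall>B. bounded B \<longrightarrow> set_integrable lebesgue (B \<inter> kdom T) (\<lambda>z. (u z)^2))"

end

theory Submission
  imports Defs
begin

lemma krho_alt: "krho z z0 = max (sqrt \<bar>fst z - fst z0\<bar>)
   (max (root 3 (norm (fst (snd z) - fst (snd z0) + (fst z - fst z0) *\<^sub>R snd (snd z0)))) (norm (snd (snd z) - snd (snd z0))))"
  unfolding krho_def by (simp split: prod.split)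

lemma krho_nonneg: "krho z z0 \<ge> 0"
  unfolding krho_alt by (simp add: max.coboundedI2)

lemma root3_le_iff: assumes "r \<ge> 0" shows "root 3 y \<le> r \<longleftrightarrow> y \<le> r^3"
proof -
  have "root 3 y \<le> r \<longleftrightarrow> root 3 y \<le> root 3 (r^3)" using assms by (simp add: real_root_power_cancel)
  also have "\<dots> \<longleftrightarrow> y \<le> r^3" by (rule real_root_le_iff) simp
  finally show ?thesis .
qed

lemma root3_less_iff: assumes "r \<ge> 0" shows "root 3 y < r \<longleftrightarrow> y < r^3"
proof -
  have "root 3 y < r \<longleftrightarrow> root 3 y < root 3 (r^3)" using assms by (simp add: real_root_power_cancel)
  also have "\<dots> \<longleftrightarrow> y < r^3" by (rule real_root_less_iff) simp
  finally show ?thesis .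
qed

lemma sqrt_le_iff2: "r \<ge> 0 \<Longrightarrow> sqrt y \<le> r \<longleftrightarrow> y \<le> r^2"
  by (metis real_sqrt_le_iff real_sqrt_unique zero_le_power2 real_sqrt_power)
lemma sqrt_less_iff2: "r \<ge> 0 \<Longrightarrow> sqrt y < r \<longleftrightarrow> y < r^2"
  by (metis real_sqrt_less_iff real_sqrt_unique zero_le_power2)

lemma krho_le_iff: assumes "r \<ge> 0"
  shows "krho (t,x,v) (t0,x0,v0) \<le> r \<longleftrightarrow> \<bar>t - t0\<bar> \<le> r^2 \<and>
     norm (x - x0 + (t - t0) *\<^sub>R v0) \<le> r^3 \<and> norm (v - v0) \<le> r"
  using assms by (simp add: krho_def sqrt_le_iff2 root3_le_iff)

lemma krho_less_iff: assumes "r \<ge> 0"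
  shows "krho (t,x,v) (t0,x0,v0) < r \<longleftrightarrow> \<bar>t - t0\<bar> < r^2 \<and>
     norm (x - x0 + (t - t0) *\<^sub>R v0) < r^3 \<and> norm (v - v0) < r"
  using assms by (simp add: krho_def sqrt_less_iff2 root3_less_iff)

lemma krho_triangle: "krho a c \<le> krho a b + krho b c"
proof -
  obtain t1 x1 v1 where a: "a = (t1,x1,v1)" by (cases a) auto
  obtain t2 x2 v2 where b: "b = (t2,x2,v2)" by (cases b) auto
  obtain t3 x3 v3 where c: "c = (t3,x3,v3)" by (cases c) auto
  define p where "p = krho a b"
  define q where "q = krho b c"
  have p0: "p \<ge> 0" and q0: "q \<ge> 0" unfolding p_def q_def by (rule krho_nonneg)+
  have P: "\<bar>t1 - t2\<bar> \<le> p^2" "norm (x1 - x2 + (t1 - t2) *\<^sub>R v2) \<le> p^3" "norm (v1 - v2) \<le> p"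
    using krho_le_iff[OF p0, of t1 x1 v1 t2 x2 v2] p_def a b by auto
  have Q: "\<bar>t2 - t3\<bar> \<le> q^2" "norm (x2 - x3 + (t2 - t3) *\<^sub>R v3) \<le> q^3" "norm (v2 - v3) \<le> q"
    using krho_le_iff[OF q0, of t2 x2 v2 t3 x3 v3] q_def b c by auto
  have "\<bar>t1 - t3\<bar> \<le> (p+q)^2"
  proof -
    have "\<bar>t1 - t3\<bar> \<le> \<bar>t1 - t2\<bar> + \<bar>t2 - t3\<bar>" by simp
    also have "\<dots> \<le> p^2 + q^2" using P Q by simp
    also have "\<dots> \<le> (p+q)^2" using p0 q0 by (simp add: power2_eq_square algebra_simps)
    finally show ?thesis .
  qed
  moreover have "norm (x1 - x3 + (t1 - t3) *\<^sub>R v3) \<le> (p+q)^3"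
  proof -
    have eq: "x1 - x3 + (t1 - t3) *\<^sub>R v3 = (x1 - x2 + (t1 - t2) *\<^sub>R v2) + (x2 - x3 + (t2 - t3) *\<^sub>R v3)
        + (t1 - t2) *\<^sub>R (v3 - v2)" by (simp add: algebra_simps)
    have "norm ((t1 - t2) *\<^sub>R (v3 - v2)) = \<bar>t1 - t2\<bar> * norm (v2 - v3)" by (simp add: norm_minus_commute)
    also have "\<dots> \<le> p^2 * q" using P Q by (intro mult_mono) auto
    finally have n3: "norm ((t1 - t2) *\<^sub>R (v3 - v2)) \<le> p^2 * q" .
    have "norm (x1 - x3 + (t1 - t3) *\<^sub>R v3) \<le> p^3 + q^3 + p^2 * q"
      unfolding eq by (rule order_trans[OF norm_triangle_ineq add_mono[OF order_trans[OF norm_triangle_ineq add_mono[OF P(2) Q(2)]] n3]])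
    also have "\<dots> \<le> (p+q)^3" using p0 q0 by (simp add: power3_eq_cube power2_eq_square algebra_simps)
    finally show ?thesis .
  qed
  moreover have "norm (v1 - v3) \<le> p + q"
    using norm_triangle_ineq[of "v1 - v2" "v2 - v3"] P Q by simp
  moreover have "p + q \<ge> 0" using p0 q0 by simp
  ultimately have "krho (t1,x1,v1) (t3,x3,v3) \<le> p + q"
    using krho_le_iff[of "p+q" t1 x1 v1 t3 x3 v3] by blast
  then show ?thesis using a c p_def q_def by simp
qed

lemma krho_sym: "krho b a \<le> 2 * krho a b"
proof -
  obtain t1 x1 v1 where a: "a = (t1,x1,v1)" by (cases a) auto
  obtain t2 x2 v2 where b: "b = (t2,x2,v2)" by (cases b) auto
  define p where "p = krho a b"
  have p0: "p \<ge> 0" unfolding p_def by (rule krho_nonneg)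
  have P: "\<bar>t1 - t2\<bar> \<le> p^2" "norm (x1 - x2 + (t1 - t2) *\<^sub>R v2) \<le> p^3" "norm (v1 - v2) \<le> p"
    using krho_le_iff[OF p0, of t1 x1 v1 t2 x2 v2] p_def a b by auto
  have "\<bar>t2 - t1\<bar> \<le> (2*p)^2" using P p0 by (simp add: power2_eq_square abs_minus_commute)
  moreover have "norm (x2 - x1 + (t2 - t1) *\<^sub>R v1) \<le> (2*p)^3"
  proof -
    have eq: "x2 - x1 + (t2 - t1) *\<^sub>R v1 = - (x1 - x2 + (t1 - t2) *\<^sub>R v2) + (t1 - t2) *\<^sub>R (v2 - v1)"
      by (simp add: algebra_simps)
    have "norm ((t1 - t2) *\<^sub>R (v2 - v1)) = \<bar>t1 - t2\<bar> * norm (v1 - v2)" by (simp add: norm_minus_commute)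
    also have "\<dots> \<le> p^2 * p" using P by (intro mult_mono) auto
    finally have n3: "norm ((t1 - t2) *\<^sub>R (v2 - v1)) \<le> p^2 * p" .
    have "norm (x2 - x1 + (t2 - t1) *\<^sub>R v1) \<le> p^3 + p^2 * p"
    proof -
      have "norm (x2 - x1 + (t2 - t1) *\<^sub>R v1) \<le> norm (- (x1 - x2 + (t1 - t2) *\<^sub>R v2)) + norm ((t1 - t2) *\<^sub>R (v2 - v1))"
        unfolding eq by (rule norm_triangle_ineq)
      moreover have "norm (- (x1 - x2 + (t1 - t2) *\<^sub>R v2)) = norm (x1 - x2 + (t1 - t2) *\<^sub>R v2)" by (rule norm_minus_cancel)
      ultimately show ?thesis using P(2) n3 by linarith
    qed
    also have "\<dots> \<le> (2*p)^3" using p0 by (simp add: power3_eq_cube power2_eq_square)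
    finally show ?thesis .
  qed
  moreover have "norm (v2 - v1) \<le> 2 * p" using P p0 by (simp add: norm_minus_commute)
  moreover have "2 * p \<ge> 0" using p0 by simp
  ultimately have "krho (t2,x2,v2) (t1,x1,v1) \<le> 2 * p"
    using krho_le_iff[of "2*p" t2 x2 v2 t1 x1 v1] by blast
  then show ?thesis using a b p_def by simp
qed

lemma kcyl_alt: assumes "r > 0" shows "kcyl r z0 = {z. fst z < fst z0 \<and> krho z z0 < r}"
proof -
  obtain t0 x0 v0 where z0: "z0 = (t0,x0,v0)" by (cases z0) auto
  have "z \<in> kcyl r z0 \<longleftrightarrow> fst z < fst z0 \<and> krho z z0 < r" for z
  proof -
    obtain t x v where z: "z = (t,x,v)" by (cases z) auto
    show ?thesis using assms unfolding z z0 kcyl_def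
      by (auto simp: krho_less_iff root3_less_iff)
  qed
  then show ?thesis by auto
qed

lemma krho_self: "krho z z = 0"
  unfolding krho_alt by simp

lemma continuous_krho: "continuous_on UNIV (\<lambda>p. krho (fst p) (snd p))"
  unfolding krho_alt by (intro continuous_intros)

lemma isCont_krho: "isCont (\<lambda>p. krho (fst p) (snd p)) p"
  using continuous_krho continuous_on_eq_continuous_at open_UNIV by blast

lemma continuous_krho1: "continuous_on UNIV (\<lambda>z. krho z z0)"
  unfolding krho_alt by (intro continuous_intros)

lemma open_kcyl: "open (kcyl r z0)"
proof (cases "r > 0")
  case True
  show ?thesis unfolding kcyl_alt[OF True]
    by (intro open_Collect_conj open_Collect_less continuous_intros continuous_krho1[THEN continuous_on_subset]) auto
next
  case False
  then have "kcyl r z0 = {}"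
    by (cases z0) (auto simp: kcyl_def, smt (verit) real_root_ge_0_iff norm_ge_zero)
  then show ?thesis by simp
qed

lemma kcyl_sets[measurable]: "kcyl r z0 \<in> sets lborel"
  unfolding sets_lborel by (rule borel_open[OF open_kcyl])


lemma kcyl_slice:
  assumes "r > 0"
  shows "Pair t -` kcyl r (t0,x0,v0) = (if t0 - r^2 < t \<and> t < t0
     then ball (x0 - (t - t0) *\<^sub>R v0) (r^3) \<times> ball v0 r else {})"
proof -
  have "dist (x0 - (t - t0) *\<^sub>R v0) x = norm (x - x0 + (t - t0) *\<^sub>R v0)" for x :: "real^'a"
    by (simp add: dist_norm norm_minus_commute algebra_simps)
  then show ?thesis using assms
    by (auto simp: kcyl_def root3_less_iff dist_commute[of v0] dist_norm norm_minus_commute)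
qed

lemma emeasure_kcyl:
  assumes r: "r > 0"
  shows "emeasure lborel (kcyl r z0 :: 'd::finite kpoint set) =
     ennreal (unit_ball_vol (DIM(real^'d)) ^ 2 * r ^ (4 * DIM(real^'d) + 2))"
proof -
  obtain t0 x0 v0 where z0: "z0 = (t0,x0,v0)" by (cases z0) auto
  let ?n = "DIM(real^'d)"
  let ?C = "emeasure (lborel :: ((real^'d) \<times> (real^'d)) measure) (ball x0 (r^3) \<times> ball v0 r)"
  have ballprod: "emeasure (lborel :: ((real^'d) \<times> (real^'d)) measure) (ball c (r^3) \<times> ball v0 r) =
     ennreal (unit_ball_vol ?n * (r^3) ^ ?n) * ennreal (unit_ball_vol ?n * r ^ ?n)" for c :: "real^'d"
  proof -
    have "emeasure (lborel :: ((real^'d) \<times> (real^'d)) measure) (ball c (r^3) \<times> ball v0 r)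
       = emeasure (lborel \<Otimes>\<^sub>M lborel) (ball c (r^3) \<times> ball v0 r)" by (simp add: lborel_prod)
    also have "\<dots> = emeasure lborel (ball c (r^3)) * emeasure lborel (ball v0 r)"
      by (rule lborel.emeasure_pair_measure_Times) auto
    finally show ?thesis using r by (simp add: emeasure_ball)
  qed
  have "emeasure lborel (kcyl r z0 :: 'd::finite kpoint set) = emeasure (lborel \<Otimes>\<^sub>M lborel) (kcyl r z0 :: 'd::finite kpoint set)"
    by (simp add: lborel_prod)
  also have "\<dots> = (\<integral>\<^sup>+t. emeasure lborel (Pair t -` (kcyl r z0 :: 'd::finite kpoint set)) \<partial>lborel)"
    by (rule lborel.emeasure_pair_measure_alt) (unfold lborel_prod, rule kcyl_sets)
  also have "\<dots> = (\<integral>\<^sup>+t. ennreal (unit_ball_vol ?n * (r^3) ^ ?n) * ennreal (unit_ball_vol ?n * r ^ ?n)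
        * indicator {t0 - r^2 <..< t0} t \<partial>lborel)"
    by (intro nn_integral_cong) (simp add: z0 kcyl_slice[OF r] ballprod split: split_indicator)
  also have "\<dots> = ennreal (unit_ball_vol ?n * (r^3) ^ ?n) * ennreal (unit_ball_vol ?n * r ^ ?n) * ennreal (r^2)"
    by (subst nn_integral_cmult_indicator) auto
  also have "\<dots> = ennreal (unit_ball_vol ?n ^ 2 * r ^ (4 * ?n + 2))"
  proof -
    have "(r^3)^?n * r^?n * r^2 = r^(4 * ?n + 2)"
    proof -
      have "(r^3)^?n = r^(3 * ?n)" by (simp add: power_mult)
      moreover have "r^(3 * ?n) * r^?n * r^2 = r^(3 * ?n + ?n + 2)" by (simp only: power_add)
      moreover have "3 * ?n + ?n + 2 = 4 * ?n + 2" by simp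
      ultimately show ?thesis by metis
    qed
    then show ?thesis
    using r unit_ball_vol_pos[of "real CARD('d)", simplified] less_imp_neq[OF unit_ball_vol_pos[of "real CARD('d)"]] by (simp add: ennreal_mult'[symmetric] power2_eq_square)
  qed
  finally show ?thesis .
qed

definition kap :: "'d::finite itself \<Rightarrow> real" where
  "kap _ = unit_ball_vol (DIM(real^'d)) ^ 2"
definition kdim :: "'d::finite itself \<Rightarrow> nat" where
  "kdim _ = 4 * DIM(real^'d) + 2"

lemma kap_pos: "kap TYPE('d::finite) > 0"
proof -
  have "unit_ball_vol (real CARD('d)) > 0" by (rule unit_ball_vol_pos) simp
  then show ?thesis unfolding kap_def by (metis zero_less_power DIM_cart DIM_real mult_1_right)
qed

lemma measure_kcyl:
  assumes r: "r > 0"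
  shows "measure lebesgue (kcyl r z0 :: 'd::finite kpoint set) = kap TYPE('d) * r ^ kdim TYPE('d)"
    and "emeasure lebesgue (kcyl r z0 :: 'd::finite kpoint set) = ennreal (kap TYPE('d) * r ^ kdim TYPE('d))"
proof -
  show e: "emeasure lebesgue (kcyl r z0 :: 'd::finite kpoint set) = ennreal (kap TYPE('d) * r ^ kdim TYPE('d))"
    using emeasure_kcyl[OF r, of z0] emeasure_completion[OF sets_completionI_sets[OF kcyl_sets[of r z0]]]
      main_part[OF kcyl_sets[of r z0]] by (simp add: kap_def kdim_def)
  show "measure lebesgue (kcyl r z0 :: 'd::finite kpoint set) = kap TYPE('d) * r ^ kdim TYPE('d)"
    unfolding measure_def e using r kap_pos[where 'd='d] by (simp add: less_imp_le)
qed

lemma abs_le_1_sq: "\<bar>x::real\<bar> \<le> 1 + x^2"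
proof (cases "\<bar>x\<bar> \<le> 1")
  case True then show ?thesis using zero_le_power2[of x] by linarith
next
  case False
  have "\<bar>x\<bar> * 1 \<le> \<bar>x\<bar> * \<bar>x\<bar>" using False by (intro mult_left_mono) auto
  also have "\<dots> = x^2" by (simp add: power2_eq_square abs_mult_self_eq)
  finally show ?thesis by simp
qed

lemma set_integrable_sq_imp:
  fixes f :: "'a::euclidean_space \<Rightarrow> real"
  assumes A: "A \<in> sets lebesgue" "emeasure lebesgue A < \<infinity>"
    and m: "set_borel_measurable lebesgue A f"
    and i: "set_integrable lebesgue A (\<lambda>z. (f z)^2)"
  shows "set_integrable lebesgue A f"
proof -
  have i1: "set_integrable lebesgue A (\<lambda>z. 1::real)"
    using A by (simp add: set_integrable_def)
  have "integrable lebesgue (\<lambda>z. indicator A z *\<^sub>R (1 + (f z)^2))"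
    using Bochner_Integration.integrable_add[OF i1[unfolded set_integrable_def] i[unfolded set_integrable_def]]
    by (simp add: algebra_simps)
  then show ?thesis unfolding set_integrable_def
  proof (rule Bochner_Integration.integrable_bound)
    show "(\<lambda>z. indicator A z *\<^sub>R f z) \<in> borel_measurable lebesgue"
      using m by (simp add: set_borel_measurable_def)
    have "\<bar>f z\<bar> \<le> 1 + (f z)^2" for z
      by (rule abs_le_1_sq)
    then show "AE z in lebesgue. norm (indicator A z *\<^sub>R f z) \<le> norm (indicator A z *\<^sub>R (1 + (f z)^2))"
      by (auto simp: indicator_def)
  qed
qed


lemma set_integral_const_real:
  assumes "A \<in> sets M" "emeasure M A < \<infinity>"
  shows "(LINT x:A|M. (c::real)) = measure M A * c"
  using assms unfolding set_lebesgue_integral_def by simp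

lemma set_integrable_const_real:
  assumes "A \<in> sets M" "emeasure M A < \<infinity>"
  shows "set_integrable M A (\<lambda>x. (c::real))"
  using assms unfolding set_integrable_def by simp

lemma set_integrable_sq_shift:
  fixes f :: "'a \<Rightarrow> real"
  assumes A: "A \<in> sets M" "emeasure M A < \<infinity>"
    and i1: "set_integrable M A f" and i2: "set_integrable M A (\<lambda>z. (f z)^2)"
  shows "set_integrable M A (\<lambda>z. (f z - c)^2)"
proof -
  have e: "(f z - c)^2 = (f z)^2 - 2 * c * f z + c^2" for z by (simp add: power2_eq_square algebra_simps)
  show ?thesis unfolding e
    using i1 i2 set_integrable_const_real[OF A]
    by (intro set_integral_add set_integral_diff set_integrable_mult_right) auto
qed

lemma avg_shift:
  fixes f :: "'a::euclidean_space \<Rightarrow> real"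
  assumes A: "A \<in> sets lebesgue" "emeasure lebesgue A < \<infinity>" "measure lebesgue A > 0"
    and i1: "set_integrable lebesgue A f"
  shows "avg A (\<lambda>z. f z - c) = avg A f - c"
proof -
  have "(LINT z:A|lebesgue. f z - c) = (LINT z:A|lebesgue. f z) - measure lebesgue A * c"
    using set_integral_diff(2)[OF i1 set_integrable_const_real[OF A(1,2)]] set_integral_const_real[OF A(1,2)] by simp
  then show ?thesis using A(3) unfolding avg_def by (simp add: field_simps)
qed

lemma avg_jensen:
  fixes f :: "'a::euclidean_space \<Rightarrow> real"
  assumes A: "A \<in> sets lebesgue" "emeasure lebesgue A < \<infinity>" "measure lebesgue A > 0"
    and i1: "set_integrable lebesgue A f" and i2: "set_integrable lebesgue A (\<lambda>z. (f z)^2)"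
  shows "(avg A f)^2 \<le> avg A (\<lambda>z. (f z)^2)"
proof -
  define m where "m = avg A f"
  define \<mu> where "\<mu> = measure lebesgue A"
  have I: "(LINT z:A|lebesgue. f z) = m * \<mu>" using A(3) unfolding m_def \<mu>_def avg_def by simp
  have e: "(f z - m)^2 = (f z)^2 - 2 * m * f z + m^2" for z by (simp add: power2_eq_square algebra_simps)
  have ic: "set_integrable lebesgue A (\<lambda>z. m^2)" by (rule set_integrable_const_real[OF A(1,2)])
  have i3: "set_integrable lebesgue A (\<lambda>z. 2 * m * f z)" using i1 by simp
  have "0 \<le> (LINT z:A|lebesgue. (f z - m)^2)"
    unfolding set_lebesgue_integral_def by (rule integral_nonneg_AE) (simp add: indicator_def)
  also have "(LINT z:A|lebesgue. (f z - m)^2) = (LINT z:A|lebesgue. (f z)^2) - 2 * m * (m * \<mu>) + \<mu> * m^2"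
    unfolding e
    using set_integral_add(2)[OF set_integral_diff(1)[OF i2 i3] ic] set_integral_diff(2)[OF i2 i3]
      set_integral_const_real[OF A(1,2), of "m^2"] I
    by (simp add: \<mu>_def)
  finally have "m^2 * \<mu> \<le> (LINT z:A|lebesgue. (f z)^2)" by (simp add: power2_eq_square algebra_simps)
  then have "m^2 \<le> (LINT z:A|lebesgue. (f z)^2) / \<mu>" using A(3) unfolding \<mu>_def
    by (simp add: pos_le_divide_eq mult.commute)
  then show ?thesis unfolding m_def \<mu>_def by (simp add: avg_def)
qed

lemma set_integral_subset_mono:
  fixes h :: "'a \<Rightarrow> real"
  assumes "A \<subseteq> B" "A \<in> sets M" "set_integrable M B h" "\<And>x. x \<in> B \<Longrightarrow> h x \<ge> 0"
  shows "(LINT x:A|M. h x) \<le> (LINT x:B|M. h x)"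
proof -
  have iA: "set_integrable M A h" by (rule set_integrable_subset[OF assms(3) assms(2) assms(1)])
  show ?thesis using iA assms(3) unfolding set_integrable_def set_lebesgue_integral_def
    by (intro integral_mono) (use assms(1,4) in \<open>auto simp: indicator_def\<close>)
qed

lemma closure_kdom_le: fixes z0 :: "'d::finite kpoint" assumes "z0 \<in> closure (kdom T)" shows "ereal (fst z0) \<le> T"
proof -
  have cl: "closed {z::'d kpoint. ereal (fst z) \<le> T}"
  proof (cases T)
    case (real T')
    have "{z::'d kpoint. ereal (fst z) \<le> T} = {z. fst z \<le> T'}" using real by auto
    then show ?thesis by (simp add: closed_Collect_le continuous_on_fst continuous_on_const)
  next
    case PInf then show ?thesis by simp
  next
    case MInf then show ?thesis by simp
  qed
  have "kdom T \<subseteq> {z::'d kpoint. ereal (fst z) \<le> T}" by (auto simp: kdom_def)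
  then have "closure (kdom T) \<subseteq> {z::'d kpoint. ereal (fst z) \<le> T}" by (rule closure_minimal[OF _ cl])
  then show ?thesis using assms by auto
qed

lemma kcyl_sub_kdom: assumes "z0 \<in> closure (kdom T)" shows "kcyl r z0 \<subseteq> kdom T"
proof
  fix z assume z: "z \<in> kcyl r z0"
  then have "fst z < fst z0" by (cases z; cases z0) (auto simp: kcyl_def)
  then have "ereal (fst z) < ereal (fst z0)" by simp
  then show "z \<in> kdom T" using closure_kdom_le[OF assms] unfolding kdom_def
    using order_less_le_trans by blast
qed

lemma kcyl_empty: "r \<le> 0 \<Longrightarrow> kcyl r z0 = {}"
  by (cases z0) (auto simp: kcyl_def, meson norm_ge_zero order_le_less_trans not_le)

lemma kcyl_mono: assumes "r \<le> R" shows "kcyl r z \<subseteq> kcyl R z"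
proof (cases "r > 0")
  case True
  then have R: "R > 0" using assms by linarith
  show ?thesis using assms unfolding kcyl_alt[OF True] kcyl_alt[OF R] by auto
next
  case False then show ?thesis by (simp add: kcyl_empty)
qed

lemma bounded_kcyl: "bounded (kcyl r z0)"
proof -
  obtain t0 x0 v0 where z0: "z0 = (t0,x0,v0)" by (cases z0) auto
  define M where "M = (\<bar>t0\<bar> + r^2) + ((norm x0 + \<bar>r\<bar>^3 + r^2 * norm v0) + (norm v0 + \<bar>r\<bar>))"
  have "norm z \<le> M" if "z \<in> kcyl r z0" for z
  proof -
    obtain t x v where z: "z = (t,x,v)" by (cases z) auto
    have h: "- (r^2) < t - t0" "t - t0 < 0" "norm (v - v0) < r" "root 3 (norm (x - x0 + (t - t0) *\<^sub>R v0)) < r"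
      using that unfolding z z0 kcyl_def by auto
    have r0: "r > 0" using h(3) by (meson norm_ge_zero order_le_less_trans)
    have t: "\<bar>t\<bar> \<le> \<bar>t0\<bar> + r^2" using h by linarith
    have v: "norm v \<le> norm v0 + \<bar>r\<bar>" using h(3) norm_triangle_ineq2[of v v0] by linarith
    have x1: "norm (x - x0 + (t - t0) *\<^sub>R v0) < r^3" using h(4) r0 by (simp add: root3_less_iff)
    have "norm ((t - t0) *\<^sub>R v0) \<le> r^2 * norm v0" using h(1,2) by (simp add: mult_right_mono)
    then have x: "norm x \<le> norm x0 + \<bar>r\<bar>^3 + r^2 * norm v0"
      using x1 r0 norm_triangle_ineq4[of "x - x0 + (t - t0) *\<^sub>R v0" "(t - t0) *\<^sub>R v0"] norm_triangle_ineq[of x0 "x - x0"]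
      by (simp add: algebra_simps)
    have "norm z \<le> \<bar>t\<bar> + norm (x, v)" unfolding z by (rule order_trans[OF norm_Pair_le]) simp
    also have "norm (x,v) \<le> norm x + norm v" by (rule norm_Pair_le)
    finally show ?thesis using t x v unfolding M_def by linarith
  qed
  then show ?thesis unfolding bounded_iff by blast
qed

lemma kcyl_fin: "emeasure lebesgue (kcyl r (z0::'d::finite kpoint)) < \<infinity>"
proof (cases "r > 0")
  case True then show ?thesis using measure_kcyl(2)[OF True, of z0] by simp
next
  case False then show ?thesis by (simp add: kcyl_empty)
qed

lemma kcyl_lsets: "kcyl r z0 \<in> sets lebesgue"
  by (rule sets_completionI_sets[OF kcyl_sets])


lemma L2loc_cyl:
  fixes u :: "'d::finite kpoint \<Rightarrow> real"
  assumes L: "L2loc T u" and z0: "z0 \<in> closure (kdom T)"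
  shows "set_borel_measurable lebesgue (kcyl r z0) u"
    and "set_integrable lebesgue (kcyl r z0) (\<lambda>z. (u z)^2)"
    and "set_integrable lebesgue (kcyl r z0) u"
proof -
  have sub: "kcyl r z0 \<subseteq> kdom T" by (rule kcyl_sub_kdom[OF z0])
  show m: "set_borel_measurable lebesgue (kcyl r z0) u"
    using L unfolding L2loc_def using set_borel_measurable_subset[OF _ kcyl_lsets sub] by blast
  have "kcyl r z0 \<inter> kdom T = kcyl r z0" using sub by blast
  then show i2: "set_integrable lebesgue (kcyl r z0) (\<lambda>z. (u z)^2)"
    using L bounded_kcyl[of r z0] unfolding L2loc_def by metis
  show "set_integrable lebesgue (kcyl r z0) u"
    by (rule set_integrable_sq_imp[OF kcyl_lsets kcyl_fin m i2])
qed

lemma avg_compare: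
  fixes u :: "'d::finite kpoint \<Rightarrow> real"
  assumes L: "L2loc T u" and b: "b \<in> closure (kdom T)" and \<rho>: "\<rho> > 0" and r: "r > 0"
    and sub: "kcyl \<rho> a \<subseteq> kcyl r b"
    and E: "avg (kcyl r b) (\<lambda>z. (u z - avg (kcyl r b) u)^2) \<le> E"
  shows "(avg (kcyl \<rho> a) u - avg (kcyl r b) u)^2 \<le> (r / \<rho>) ^ kdim TYPE('d) * E"
proof -
  define A where "A = kcyl \<rho> a"
  define B where "B = kcyl r b"
  define m where "m = avg B u"
  have iB1: "set_integrable lebesgue B u" and iB2: "set_integrable lebesgue B (\<lambda>z. (u z)^2)"
    using L2loc_cyl[OF L b] unfolding B_def by auto
  have Al: "A \<in> sets lebesgue" "emeasure lebesgue A < \<infinity>" unfolding A_def by (rule kcyl_lsets, rule kcyl_fin)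
  have Bl: "B \<in> sets lebesgue" "emeasure lebesgue B < \<infinity>" unfolding B_def by (rule kcyl_lsets, rule kcyl_fin)
  have Am: "measure lebesgue A = kap TYPE('d) * \<rho> ^ kdim TYPE('d)" unfolding A_def by (rule measure_kcyl(1)[OF \<rho>])
  have Bm: "measure lebesgue B = kap TYPE('d) * r ^ kdim TYPE('d)" unfolding B_def by (rule measure_kcyl(1)[OF r])
  have Apos: "measure lebesgue A > 0" unfolding Am using kap_pos[where 'd='d] \<rho> by simp
  have Bpos: "measure lebesgue B > 0" unfolding Bm using kap_pos[where 'd='d] r by simp
  have AB: "A \<subseteq> B" using sub unfolding A_def B_def .
  have iA1: "set_integrable lebesgue A u" by (rule set_integrable_subset[OF iB1 Al(1) AB])
  have iA2: "set_integrable lebesgue A (\<lambda>z. (u z)^2)" by (rule set_integrable_subset[OF iB2 Al(1) AB])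
  have iAg: "set_integrable lebesgue A (\<lambda>z. u z - m)"
    using set_integral_diff(1)[OF iA1 set_integrable_const_real[OF Al]] .
  have iAg2: "set_integrable lebesgue A (\<lambda>z. (u z - m)^2)" by (rule set_integrable_sq_shift[OF Al iA1 iA2])
  have iBg2: "set_integrable lebesgue B (\<lambda>z. (u z - m)^2)" by (rule set_integrable_sq_shift[OF Bl iB1 iB2])
  have "(avg A u - m)^2 = (avg A (\<lambda>z. u z - m))^2" using avg_shift[OF Al Apos iA1] by simp
  also have "\<dots> \<le> avg A (\<lambda>z. (u z - m)^2)" by (rule avg_jensen[OF Al Apos iAg iAg2])
  also have "\<dots> = (LINT z:A|lebesgue. (u z - m)^2) / measure lebesgue A" by (simp add: avg_def)
  also have "\<dots> \<le> (LINT z:B|lebesgue. (u z - m)^2) / measure lebesgue A"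
    using set_integral_subset_mono[OF AB Al(1) iBg2] Apos by (simp add: divide_right_mono)
  also have "\<dots> = (measure lebesgue B / measure lebesgue A) * avg B (\<lambda>z. (u z - m)^2)"
    using Bpos by (simp add: avg_def)
  also have "\<dots> \<le> (measure lebesgue B / measure lebesgue A) * E"
    using E Apos Bpos unfolding B_def m_def by (intro mult_left_mono) auto
  also have "measure lebesgue B / measure lebesgue A = (r / \<rho>) ^ kdim TYPE('d)"
    unfolding Am Bm using kap_pos[where 'd='d] by (simp add: power_divide)
  finally show ?thesis unfolding A_def B_def m_def .
qed

locale kcamp =
  fixes T :: ereal and u :: "'d::finite kpoint \<Rightarrow> real" and k \<alpha> :: real
  assumes L: "L2loc T u" and k0: "k \<ge> 0" and a0: "0 < \<alpha>" and a1: "\<alpha> \<le> 1"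
    and camp: "\<And>r z0. r > 0 \<Longrightarrow> z0 \<in> closure (kdom T) \<Longrightarrow>
        avg (kcyl r z0) (\<lambda>z. (u z - avg (kcyl r z0) u)^2) \<le> (k * r powr \<alpha>)^2"
begin

definition m :: "real \<Rightarrow> 'd kpoint \<Rightarrow> real" where "m r z = avg (kcyl r z) u"

definition c0 :: real where "c0 = sqrt (2 ^ kdim TYPE('d))"

lemma c0_pos: "c0 > 0" unfolding c0_def by simp

lemma sq_to_abs:
  assumes "x^2 \<le> c * y^2" "c \<ge> 0" "y \<ge> 0"
  shows "\<bar>x\<bar> \<le> sqrt c * y"
proof -
  have "sqrt (x^2) \<le> sqrt (c * y^2)" using assms(1) by (rule real_sqrt_le_mono)
  then show ?thesis using assms(2,3) by (simp add: real_sqrt_mult)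
qed

lemma m_compare:
  assumes b: "b \<in> closure (kdom T)" and \<rho>: "\<rho> > 0" and r: "r > 0" and r2: "r \<le> 2 * \<rho>"
    and sub: "kcyl \<rho> a \<subseteq> kcyl r b"
  shows "\<bar>m \<rho> a - m r b\<bar> \<le> c0 * (k * r powr \<alpha>)"
proof -
  have "(m \<rho> a - m r b)^2 \<le> (r / \<rho>) ^ kdim TYPE('d) * (k * r powr \<alpha>)^2"
    unfolding m_def by (rule avg_compare[OF L b \<rho> r sub camp[OF r b]])
  also have "\<dots> \<le> 2 ^ kdim TYPE('d) * (k * r powr \<alpha>)^2"
    using \<rho> r r2 by (intro mult_right_mono power_mono) (auto simp: divide_le_eq)
  finally show ?thesis unfolding c0_def using k0 by (intro sq_to_abs) auto
qed

definition S :: real where "S = 1 / (1 - 2 powr (- \<alpha>))"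

lemma q_less: "2 powr (- \<alpha>) < 1" using a0 by (simp add: powr_less_one)
lemma q_pos: "2 powr (- \<alpha>) > 0" by simp

lemma S_ge1: "S \<ge> 1" unfolding S_def using q_less q_pos by (simp add: field_simps)
lemma S_eq: "1 + 2 powr (- \<alpha>) * S = S"
proof -
  have h: "1 - 2 powr (- \<alpha>) \<noteq> 0" using q_less by linarith
  show ?thesis unfolding S_def using h by (simp add: field_simps)
qed

lemma m_chain:
  assumes z: "z \<in> closure (kdom T)"
  shows "0 < \<rho> \<Longrightarrow> \<rho> \<le> r \<Longrightarrow> r \<le> 2^n * \<rho> \<Longrightarrow> \<bar>m \<rho> z - m r z\<bar> \<le> c0 * S * (k * r powr \<alpha>)"
proof (induction n arbitrary: r)
  case 0
  then have "r = \<rho>" by simp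
  then show ?case using c0_pos S_ge1 k0 by simp
next
  case (Suc n)
  have r0: "r > 0" using Suc.prems by linarith
  have nn: "0 \<le> c0 * (k * r powr \<alpha>)" using c0_pos k0 by simp
  show ?case
  proof (cases "r \<le> 2 * \<rho>")
    case True
    have "\<bar>m \<rho> z - m r z\<bar> \<le> c0 * (k * r powr \<alpha>)"
      using m_compare[OF z Suc.prems(1) r0 True kcyl_mono[OF Suc.prems(2)]] .
    also have "\<dots> \<le> S * (c0 * (k * r powr \<alpha>))" using mult_right_mono[OF S_ge1 nn] by simp
    also have "\<dots> = c0 * S * (k * r powr \<alpha>)" by simp
    finally show ?thesis .
  next
    case False
    define r' where "r' = r / 2"
    have r'1: "\<rho> \<le> r'" using False unfolding r'_def by simp
    have r'2: "r' \<le> 2^n * \<rho>" using Suc.prems(3) unfolding r'_def by simp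
    have r'0: "r' > 0" using r0 unfolding r'_def by simp
    have IH: "\<bar>m \<rho> z - m r' z\<bar> \<le> c0 * S * (k * r' powr \<alpha>)" by (rule Suc.IH[OF Suc.prems(1) r'1 r'2])
    have st: "\<bar>m r' z - m r z\<bar> \<le> c0 * (k * r powr \<alpha>)"
    proof -
      have h1: "r \<le> 2 * r'" unfolding r'_def by simp
      have h2: "r' \<le> r" using r0 unfolding r'_def by simp
      show ?thesis by (rule m_compare[OF z r'0 r0 h1 kcyl_mono[OF h2]])
    qed
    have "r' powr \<alpha> = 2 powr (- \<alpha>) * r powr \<alpha>"
    proof -
      have "r' powr \<alpha> = r powr \<alpha> / 2 powr \<alpha>" unfolding r'_def using r0 by (simp add: powr_divide)
      also have "\<dots> = 2 powr (- \<alpha>) * r powr \<alpha>" by (simp add: powr_minus_divide)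
      finally show ?thesis .
    qed
    then have "c0 * S * (k * r' powr \<alpha>) = 2 powr (- \<alpha>) * S * (c0 * (k * r powr \<alpha>))" by simp
    have "\<bar>m \<rho> z - m r z\<bar> \<le> \<bar>m \<rho> z - m r' z\<bar> + \<bar>m r' z - m r z\<bar>" by linarith
    also have "\<dots> \<le> 2 powr (- \<alpha>) * S * (c0 * (k * r powr \<alpha>)) + c0 * (k * r powr \<alpha>)"
      using IH st \<open>c0 * S * (k * r' powr \<alpha>) = _\<close> by linarith
    also have "\<dots> = (1 + 2 powr (- \<alpha>) * S) * (c0 * (k * r powr \<alpha>))" by (simp add: algebra_simps)
    finally have "\<bar>m \<rho> z - m r z\<bar> \<le> (1 + 2 powr (- \<alpha>) * S) * (c0 * (k * r powr \<alpha>))" .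
    also have "(1 + 2 powr (- \<alpha>) * S) * (c0 * (k * r powr \<alpha>)) = c0 * S * (k * r powr \<alpha>)"
      unfolding S_eq by (simp only: mult_ac)
    finally show ?thesis .
  qed
qed

definition C1 :: real where "C1 = c0 * S"

lemma C1_pos: "C1 > 0" unfolding C1_def using c0_pos S_ge1 by simp

lemma m_cauchy:
  assumes z: "z \<in> closure (kdom T)" and \<rho>: "0 < \<rho>" "\<rho> \<le> r"
  shows "\<bar>m \<rho> z - m r z\<bar> \<le> C1 * (k * r powr \<alpha>)"
proof -
  obtain n where "r / \<rho> < 2^n" using real_arch_pow[of 2 "r / \<rho>"] by auto
  then have "r \<le> 2^n * \<rho>" using \<rho> by (simp add: divide_less_eq)
  then show ?thesis using m_chain[OF z \<rho> ] unfolding C1_def by simp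
qed


lemma half_pow_powr: "((1/2::real)^i) powr \<alpha> = (2 powr (-\<alpha>))^i"
proof (induction i)
  case 0 then show ?case by simp
next
  case (Suc i)
  have h: "(1/2::real) powr \<alpha> = 2 powr (-\<alpha>)" by (simp add: powr_divide powr_minus_divide)
  have "((1/2::real)^Suc i) powr \<alpha> = ((1/2)^i * (1/2)) powr \<alpha>" by (simp add: mult.commute)
  also have "\<dots> = ((1/2)^i) powr \<alpha> * (1/2) powr \<alpha>" by (rule powr_mult; simp)
  finally show ?case using Suc h by (simp add: mult.commute)
qed

definition q :: real where "q = 2 powr (-\<alpha>)"

lemma X_bound:
  assumes z: "z \<in> closure (kdom T)" and ij: "i \<le> j"
  shows "\<bar>m ((1/2)^j) z - m ((1/2)^i) z\<bar> \<le> C1 * k * q^i"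
proof -
  have "(1/2::real)^j \<le> (1/2)^i" using ij by (rule power_decreasing) auto
  then have "\<bar>m ((1/2)^j) z - m ((1/2)^i) z\<bar> \<le> C1 * (k * ((1/2)^i) powr \<alpha>)"
    by (intro m_cauchy[OF z]) auto
  then show ?thesis unfolding half_pow_powr q_def by (simp add: mult.assoc)
qed

lemma b_tendsto: "(\<lambda>i. C1 * k * q^i) \<longlonglongrightarrow> 0"
proof -
  have "norm q < 1" using q_less q_pos unfolding q_def by simp
  then have "(\<lambda>i. q^i) \<longlonglongrightarrow> 0" by (rule LIMSEQ_power_zero)
  then show ?thesis using tendsto_mult_left[of _ 0 sequentially "C1 * k"] by simp
qed

definition w :: "'d kpoint \<Rightarrow> real" where "w z = lim (\<lambda>j. m ((1/2)^j) z)"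

lemma m_conv:
  assumes z: "z \<in> closure (kdom T)"
  shows "(\<lambda>j. m ((1/2)^j) z) \<longlonglongrightarrow> w z"
proof -
  have "Cauchy (\<lambda>j. m ((1/2)^j) z)"
  proof (rule CauchyI)
    fix e :: real assume e: "e > 0"
    have "\<forall>\<^sub>F i in sequentially. C1 * k * q^i < e / 2"
      using order_tendstoD(2)[OF b_tendsto, of "e/2"] e by simp
    then obtain M where M: "\<And>i. i \<ge> M \<Longrightarrow> C1 * k * q^i < e / 2" by (auto simp: eventually_sequentially)
    show "\<exists>M. \<forall>i\<ge>M. \<forall>j\<ge>M. norm (m ((1/2)^i) z - m ((1/2)^j) z) < e"
    proof (intro exI allI impI)
      fix i j assume i: "i \<ge> M" and j: "j \<ge> M"
      have "\<bar>m ((1/2)^i) z - m ((1/2)^M) z\<bar> \<le> C1 * k * q^M" by (rule X_bound[OF z i])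
      moreover have "\<bar>m ((1/2)^j) z - m ((1/2)^M) z\<bar> \<le> C1 * k * q^M" by (rule X_bound[OF z j])
      moreover have "C1 * k * q^M < e / 2" using M by simp
      ultimately show "norm (m ((1/2)^i) z - m ((1/2)^j) z) < e" by simp
    qed
  qed
  then show ?thesis unfolding w_def Cauchy_convergent_iff convergent_LIMSEQ_iff .
qed

lemma w_approx:
  assumes z: "z \<in> closure (kdom T)" and r: "r > 0"
  shows "\<bar>m r z - w z\<bar> \<le> C1 * (k * r powr \<alpha>)"
proof -
  obtain N where N: "(1/2::real)^N < r" using real_arch_pow_inv[OF r, of "1/2"] by auto
  have lim: "(\<lambda>n. \<bar>m ((1/2)^n) z - m r z\<bar>) \<longlonglongrightarrow> \<bar>w z - m r z\<bar>"
    by (intro tendsto_intros m_conv[OF z])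
  have "\<forall>n\<ge>N. \<bar>m ((1/2)^n) z - m r z\<bar> \<le> C1 * (k * r powr \<alpha>)"
  proof (intro allI impI)
    fix n assume n: "n \<ge> N"
    have h: "(1/2::real)^n \<le> (1/2)^N" using n by (rule power_decreasing) auto
    show "\<bar>m ((1/2)^n) z - m r z\<bar> \<le> C1 * (k * r powr \<alpha>)"
    proof (rule m_cauchy[OF z])
      show "0 < (1/2::real)^n" by simp
      show "(1/2::real)^n \<le> r" using h N by linarith
    qed
  qed
  then have "\<bar>w z - m r z\<bar> \<le> C1 * (k * r powr \<alpha>)" using LIMSEQ_le_const2[OF lim] by blast
  then show ?thesis by (simp add: abs_minus_commute)
qed

end

lemma kcyl_shift:
  assumes ab: "fst a \<le> fst b" and \<rho>: "\<rho> > 0"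
  shows "kcyl \<rho> a \<subseteq> kcyl (\<rho> + krho a b) b"
proof -
  have p: "\<rho> + krho a b > 0" using \<rho> krho_nonneg[of a b] by linarith
  show ?thesis unfolding kcyl_alt[OF \<rho>] kcyl_alt[OF p]
  proof clarify
    fix z :: "'a kpoint" assume z: "fst z < fst a" "krho z a < \<rho>"
    show "fst z < fst b \<and> krho z b < \<rho> + krho a b"
      using z ab krho_triangle[of z b a] by linarith
  qed
qed

lemma krho_eq0: assumes "krho a b = 0" shows "a = b"
proof -
  obtain t1 x1 v1 where a: "a = (t1,x1,v1)" by (cases a) auto
  obtain t2 x2 v2 where b: "b = (t2,x2,v2)" by (cases b) auto
  have "krho (t1,x1,v1) (t2,x2,v2) \<le> 0" using assms a b by simp
  then have "\<bar>t1 - t2\<bar> \<le> 0" "norm (x1 - x2 + (t1 - t2) *\<^sub>R v2) \<le> 0" "norm (v1 - v2) \<le> 0"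
    using krho_le_iff[of 0 t1 x1 v1 t2 x2 v2] by auto
  then show ?thesis unfolding a b by simp
qed

lemma powr_2D: fixes D :: real assumes "D \<ge> 0" "0 < \<alpha>" "\<alpha> \<le> 1" shows "(2 * D) powr \<alpha> \<le> 2 * D powr \<alpha>"
proof -
  have "(2 * D) powr \<alpha> = 2 powr \<alpha> * D powr \<alpha>" using assms by (simp add: powr_mult)
  also have "2 powr \<alpha> \<le> 2 powr 1" using assms by (intro powr_mono) auto
  then have "2 powr \<alpha> * D powr \<alpha> \<le> 2 * D powr \<alpha>" by (intro mult_right_mono) auto
  finally show ?thesis .
qed

context kcamp
begin

definition C3 :: real where "C3 = C1 + 2 * c0 + 2 * C1"

lemma w_holder_ord:
  assumes a: "a \<in> closure (kdom T)" and b: "b \<in> closure (kdom T)" and ab: "fst a \<le> fst b"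
    and D: "krho a b \<le> D" "D > 0"
  shows "\<bar>w a - w b\<bar> \<le> C3 * (k * D powr \<alpha>)"
proof -
  have D2: "2 * D > 0" using D by simp
  have e1: "\<bar>m D a - w a\<bar> \<le> C1 * (k * D powr \<alpha>)" by (rule w_approx[OF a D(2)])
  have sub: "kcyl D a \<subseteq> kcyl (2 * D) b"
    using kcyl_shift[OF ab D(2)] kcyl_mono[of "D + krho a b" "2 * D" b] D by auto
  have e2: "\<bar>m D a - m (2 * D) b\<bar> \<le> c0 * (k * (2 * D) powr \<alpha>)"
    by (rule m_compare[OF b D(2) D2 _ sub]) simp
  have e3: "\<bar>m (2 * D) b - w b\<bar> \<le> C1 * (k * (2 * D) powr \<alpha>)" by (rule w_approx[OF b D2])
  have p2: "(2 * D) powr \<alpha> \<le> 2 * D powr \<alpha>" using powr_2D[of D] D a0 a1 by simp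
  have kp: "k * (2 * D) powr \<alpha> \<le> 2 * (k * D powr \<alpha>)" using mult_left_mono[OF p2 k0] by simp
  have e2': "\<bar>m D a - m (2 * D) b\<bar> \<le> c0 * (2 * (k * D powr \<alpha>))"
    using e2 mult_left_mono[OF kp less_imp_le[OF c0_pos]] by linarith
  have e3': "\<bar>m (2 * D) b - w b\<bar> \<le> C1 * (2 * (k * D powr \<alpha>))"
    using e3 mult_left_mono[OF kp less_imp_le[OF C1_pos]] by linarith
  have "\<bar>w a - w b\<bar> \<le> \<bar>m D a - w a\<bar> + \<bar>m D a - m (2 * D) b\<bar> + \<bar>m (2 * D) b - w b\<bar>" by linarith
  also have "\<dots> \<le> C1 * (k * D powr \<alpha>) + c0 * (2 * (k * D powr \<alpha>)) + C1 * (2 * (k * D powr \<alpha>))"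
    using e1 e2' e3' by linarith
  also have "\<dots> = C3 * (k * D powr \<alpha>)" unfolding C3_def by (simp add: algebra_simps)
  finally show ?thesis .
qed

definition C4 :: real where "C4 = 2 * C3"

lemma C3_pos: "C3 > 0" unfolding C3_def using C1_pos c0_pos by simp

lemma w_holder:
  assumes z: "z \<in> closure (kdom T)" and z': "z' \<in> closure (kdom T)"
  shows "\<bar>w z - w z'\<bar> \<le> C4 * (k * (krho z z') powr \<alpha>)"
proof (cases "krho z z' = 0")
  case True
  then show ?thesis using krho_eq0[OF True] C3_pos k0 unfolding C4_def by simp
next
  case False
  define R where "R = krho z z'"
  have R: "R > 0" using False krho_nonneg[of z z'] unfolding R_def by linarith
  define D where "D = 2 * R"
  have D: "D > 0" using R unfolding D_def by simp
  have "\<bar>w z - w z'\<bar> \<le> C3 * (k * D powr \<alpha>)"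
  proof (cases "fst z \<le> fst z'")
    case True
    have "krho z z' \<le> D" using R unfolding D_def R_def by simp
    then show ?thesis using w_holder_ord[OF z z' True _ D] by simp
  next
    case False
    have "krho z' z \<le> D" using krho_sym[of z' z] unfolding D_def R_def by simp
    then have "\<bar>w z' - w z\<bar> \<le> C3 * (k * D powr \<alpha>)" using w_holder_ord[OF z' z _ _ D] False by simp
    then show ?thesis by (simp add: abs_minus_commute)
  qed
  also have "\<dots> \<le> C3 * (k * (2 * R powr \<alpha>))"
    using powr_2D[of R] R a0 a1 k0 C3_pos unfolding D_def
    by (intro mult_left_mono) auto
  also have "\<dots> = C4 * (k * (krho z z') powr \<alpha>)" unfolding C4_def R_def by simp
  finally show ?thesis .
qed

end

lemma open_kdom: "open (kdom T :: 'd::finite kpoint set)"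
proof (cases T)
  case (real T')
  have "kdom T = {z::'d kpoint. fst z < T'}" using real by (auto simp: kdom_def)
  then show ?thesis by (simp add: open_Collect_less continuous_on_fst continuous_on_const)
next
  case PInf then show ?thesis by (simp add: kdom_def)
next
  case MInf then show ?thesis by (simp add: kdom_def)
qed

context kcamp
begin

lemma w_cont: "continuous_on (kdom T) w"
  unfolding continuous_on_def
proof
  fix z :: "'d kpoint" assume z: "z \<in> kdom T"
  have zc: "z \<in> closure (kdom T)" using z closure_subset by blast
  have t1: "((\<lambda>z'. krho z' z) \<longlongrightarrow> krho z z) (at z within kdom T)"
    using continuous_krho1[of z] z continuous_on_def by (metis UNIV_I continuous_on_subset subset_UNIV continuous_on_def)
  have t1': "((\<lambda>z'. krho z' z) \<longlongrightarrow> 0) (at z within kdom T)" using t1 unfolding krho_self .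
  have t3: "((\<lambda>z'. (krho z' z) powr \<alpha>) \<longlongrightarrow> 0) (at z within kdom T)"
    by (rule tendsto_zero_powrI[OF t1' tendsto_const]) (auto simp: krho_nonneg a0)
  have t2: "((\<lambda>z'. C4 * (k * (krho z' z) powr \<alpha>)) \<longlongrightarrow> C4 * (k * 0)) (at z within kdom T)"
    by (intro tendsto_intros t3)
  have ev: "\<forall>\<^sub>F z' in at z within kdom T. norm (w z' - w z) \<le> C4 * (k * (krho z' z) powr \<alpha>)"
    unfolding eventually_at_filter
    by (rule always_eventually) (auto intro: w_holder[OF _ zc] closure_subset[THEN subsetD])
  have "((\<lambda>z'. w z' - w z) \<longlongrightarrow> 0) (at z within kdom T)"
    by (rule Lim_null_comparison[OF ev]) (use t2 in simp)
  then show "(w \<longlongrightarrow> w z) (at z within kdom T)" by (simp add: LIM_zero_iff)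
qed

lemma W_meas: "(\<lambda>z. indicator (kdom T) z * w z) \<in> borel_measurable borel"
  using borel_measurable_continuous_on_indicator[OF borel_open[OF open_kdom] w_cont] by simp

definition K5 :: real where "K5 = 2 + 2 * (C4 + C1)^2"

lemma I_bound:
  assumes z0: "z0 \<in> kdom T" and r: "r > 0"
  shows "(\<integral>\<^sup>+z. indicator (kcyl r z0) z * ennreal ((u z - w z)^2) \<partial>lebesgue)
     \<le> ennreal (K5 * (k * r powr \<alpha>)^2 * (kap TYPE('d) * r ^ kdim TYPE('d)))"
proof -
  define Q where "Q = kcyl r z0"
  define mm where "mm = m r z0"
  define c where "c = (C4 + C1) * (k * r powr \<alpha>)"
  have z0c: "z0 \<in> closure (kdom T)" using z0 closure_subset by blast
  have Qsub: "Q \<subseteq> kdom T" unfolding Q_def by (rule kcyl_sub_kdom[OF z0c])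
  have Ql: "Q \<in> sets lebesgue" "emeasure lebesgue Q < \<infinity>" unfolding Q_def by (rule kcyl_lsets, rule kcyl_fin)
  have Qm: "measure lebesgue Q = kap TYPE('d) * r ^ kdim TYPE('d)" unfolding Q_def by (rule measure_kcyl(1)[OF r])
  have Qpos: "measure lebesgue Q > 0" unfolding Qm using kap_pos[where 'd='d] r by simp
  have i1: "set_integrable lebesgue Q u" and i2: "set_integrable lebesgue Q (\<lambda>z. (u z)^2)"
    using L2loc_cyl[OF L z0c] unfolding Q_def by auto
  have ig: "set_integrable lebesgue Q (\<lambda>z. (u z - mm)^2)" by (rule set_integrable_sq_shift[OF Ql i1 i2])
  have ic: "set_integrable lebesgue Q (\<lambda>z. 2 * c^2)" by (rule set_integrable_const_real[OF Ql])
  have ih: "set_integrable lebesgue Q (\<lambda>z. 2 * (u z - mm)^2 + 2 * c^2)"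
  proof -
    have ig2: "set_integrable lebesgue Q (\<lambda>z. 2 * (u z - mm)^2)" using ig by simp
    show ?thesis by (rule set_integral_add(1)[OF ig2 ic])
  qed
  have pw: "(u z - w z)^2 \<le> 2 * (u z - mm)^2 + 2 * c^2" if zQ: "z \<in> Q" for z
  proof -
    have zk: "z \<in> closure (kdom T)" using zQ Qsub closure_subset by blast
    have rr: "krho z z0 < r" using zQ unfolding Q_def kcyl_alt[OF r] by simp
    have "(krho z z0) powr \<alpha> \<le> r powr \<alpha>" using rr a0 krho_nonneg[of z z0] by (intro powr_mono2) auto
    then have "k * (krho z z0) powr \<alpha> \<le> k * r powr \<alpha>" using k0 by (rule mult_left_mono)
    then have h1: "\<bar>w z - w z0\<bar> \<le> C4 * (k * r powr \<alpha>)"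
      using w_holder[OF zk z0c] mult_left_mono[of _ _ C4] C3_pos unfolding C4_def by (smt (verit))
    have h2: "\<bar>mm - w z0\<bar> \<le> C1 * (k * r powr \<alpha>)" unfolding mm_def by (rule w_approx[OF z0c r])
    have b: "\<bar>mm - w z\<bar> \<le> c"
    proof -
      have "\<bar>mm - w z\<bar> \<le> \<bar>mm - w z0\<bar> + \<bar>w z - w z0\<bar>" by linarith
      also have "\<dots> \<le> C1 * (k * r powr \<alpha>) + C4 * (k * r powr \<alpha>)" using h1 h2 by linarith
      also have "\<dots> = c" unfolding c_def by (simp add: algebra_simps)
      finally show ?thesis .
    qed
    have "(mm - w z)^2 \<le> c^2" using b by (metis abs_ge_zero order_trans power2_abs power_mono abs_le_self_iff)
    moreover have "(u z - w z)^2 \<le> 2 * (u z - mm)^2 + 2 * (mm - w z)^2"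
    proof -
      have "0 \<le> ((u z - mm) - (mm - w z))^2" by simp
      then show ?thesis by (simp add: power2_eq_square algebra_simps)
    qed
    ultimately show ?thesis by linarith
  qed
  have "(\<integral>\<^sup>+z. indicator Q z * ennreal ((u z - w z)^2) \<partial>lebesgue)
      \<le> (\<integral>\<^sup>+z. ennreal (indicator Q z * (2 * (u z - mm)^2 + 2 * c^2)) \<partial>lebesgue)"
  proof (intro nn_integral_mono)
    fix z
    show "indicator Q z * ennreal ((u z - w z)^2) \<le> ennreal (indicator Q z * (2 * (u z - mm)^2 + 2 * c^2))"
    proof (cases "z \<in> Q")
      case True
      then show ?thesis using pw[OF True] by (simp add: ennreal_leI del: ennreal_plus)
    qed simp
  qed
  also have "\<dots> = ennreal (integral\<^sup>L lebesgue (\<lambda>z. indicator Q z * (2 * (u z - mm)^2 + 2 * c^2)))"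
    using ih unfolding set_integrable_def
    by (intro nn_integral_eq_integral) (auto simp: indicator_def)
  also have "integral\<^sup>L lebesgue (\<lambda>z. indicator Q z * (2 * (u z - mm)^2 + 2 * c^2))
      = 2 * (LINT z:Q|lebesgue. (u z - mm)^2) + measure lebesgue Q * (2 * c^2)"
  proof -
    have "integral\<^sup>L lebesgue (\<lambda>z. indicator Q z * (2 * (u z - mm)^2 + 2 * c^2))
       = (LINT z:Q|lebesgue. 2 * (u z - mm)^2 + 2 * c^2)" by (simp add: set_lebesgue_integral_def)
    also have "\<dots> = (LINT z:Q|lebesgue. 2 * (u z - mm)^2) + (LINT z:Q|lebesgue. 2 * c^2)"
      using ig ic by (intro set_integral_add(2)) auto
    finally show ?thesis using set_integral_const_real[OF Ql, of "2 * c^2"] by simp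
  qed
  also have "(LINT z:Q|lebesgue. (u z - mm)^2) \<le> measure lebesgue Q * (k * r powr \<alpha>)^2"
  proof -
    have "avg Q (\<lambda>z. (u z - mm)^2) \<le> (k * r powr \<alpha>)^2" unfolding Q_def mm_def m_def by (rule camp[OF r z0c])
    then show ?thesis using Qpos unfolding avg_def by (simp add: divide_le_eq mult.commute)
  qed
  then have "ennreal (2 * (LINT z:Q|lebesgue. (u z - mm)^2) + measure lebesgue Q * (2 * c^2))
     \<le> ennreal (2 * (measure lebesgue Q * (k * r powr \<alpha>)^2) + measure lebesgue Q * (2 * c^2))"
    by (intro ennreal_leI) linarith
  also have "2 * (measure lebesgue Q * (k * r powr \<alpha>)^2) + measure lebesgue Q * (2 * c^2)
      = K5 * (k * r powr \<alpha>)^2 * (kap TYPE('d) * r ^ kdim TYPE('d))"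
    unfolding Qm K5_def c_def by (simp add: power2_eq_square algebra_simps)
  finally show ?thesis unfolding Q_def mm_def .
qed

end

definition zs :: "real \<Rightarrow> 'd::finite kpoint \<Rightarrow> 'd kpoint" where
  "zs r z = (fst z + r^2/2, fst (snd z) - (r^2/2) *\<^sub>R snd (snd z), snd (snd z))"

definition c2 :: "real \<Rightarrow> 'd::finite kpoint \<Rightarrow> 'd kpoint" where
  "c2 s c = (fst c + s^2, fst (snd c) - s^2 *\<^sub>R snd (snd c), snd (snd c))"

lemma krho_zs: assumes "r > 0" shows "krho z (zs r z) \<le> 3 * r / 4"
proof -
  obtain t x v where z: "z = (t,x,v)" by (cases z) auto
  have "\<bar>t - (t + r^2/2)\<bar> \<le> (3 * r / 4)^2" using assms by (simp add: power2_eq_square)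
  moreover have "x - (x - (r^2/2) *\<^sub>R v) + (t - (t + r^2/2)) *\<^sub>R v = 0" by (simp add: algebra_simps)
  ultimately have "krho (t,x,v) (t + r^2/2, x - (r^2/2) *\<^sub>R v, v) \<le> 3 * r / 4"
    using assms by (subst krho_le_iff) auto
  then show ?thesis unfolding z zs_def by simp
qed

lemma krho_c2: assumes "s \<ge> 0" shows "krho c (c2 s c) \<le> s"
proof -
  obtain t x v where c: "c = (t,x,v)" by (cases c) auto
  have "x - (x - s^2 *\<^sub>R v) + (t - (t + s^2)) *\<^sub>R v = 0" by (simp add: algebra_simps)
  then have "krho (t,x,v) (t + s^2, x - s^2 *\<^sub>R v, v) \<le> s"
    using assms by (subst krho_le_iff) auto
  then show ?thesis unfolding c c2_def by simp
qed

lemma zs_in: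
  assumes r: "r > 0" and z0: "z0 \<in> kcyl (r/8) (zs r z)"
  shows "z \<in> kcyl r z0" and "fst z0 < fst z + r^2/2"
proof -
  have r8: "r / 8 > 0" using r by simp
  have h: "fst z0 < fst (zs r z)" "krho z0 (zs r z) < r / 8" using z0 unfolding kcyl_alt[OF r8] by auto
  show "fst z0 < fst z + r^2/2" using h(1) unfolding zs_def by simp
  obtain t0 x0 v0 where e0: "z0 = (t0,x0,v0)" by (cases z0) auto
  obtain t1 x1 v1 where e1: "zs r z = (t1,x1,v1)" by (cases "zs r z") auto
  have "\<bar>t0 - t1\<bar> < (r/8)^2" using h(2) r8 unfolding e0 e1 by (subst (asm) krho_less_iff) auto
  then have "fst z0 > fst (zs r z) - (r/8)^2" unfolding e0 e1 by auto
  moreover have "fst (zs r z) = fst z + r*r/2" "(r/8)^2 = r*r/64" by (simp_all add: zs_def power2_eq_square)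
  moreover have "0 < r*r" using r by simp
  ultimately have t: "fst z < fst z0" by linarith
  have "krho z z0 \<le> krho z (zs r z) + krho (zs r z) z0" by (rule krho_triangle)
  also have "\<dots> \<le> 3 * r / 4 + 2 * krho z0 (zs r z)" using krho_zs[OF r, of z] krho_sym[of "zs r z" z0] by linarith
  finally have "krho z z0 < r" using h(2) by linarith
  then show "z \<in> kcyl r z0" using t unfolding kcyl_alt[OF r] by simp
qed

lemma zs_inB:
  assumes R: "R > 0" and r: "r > 0" "r \<le> s" and z: "z \<in> kcyl R c" and z0: "z0 \<in> kcyl (r/8) (zs r z)"
  shows "z0 \<in> kcyl (R + 3 * s) (c2 s c)"
proof -
  have s: "s > 0" using r by linarith
  have p: "R + 3 * s > 0" using R s by simp
  have hz: "fst z < fst c" "krho z c < R" using z unfolding kcyl_alt[OF R] by auto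
  have zz0: "z \<in> kcyl r z0" "fst z0 < fst z + r^2/2" using zs_in[OF r(1) z0] by auto
  have k1: "krho z z0 < r" using zz0(1) unfolding kcyl_alt[OF r(1)] by simp
  have "r^2 \<le> s^2" using r by (intro power_mono) auto
  moreover have "fst (c2 s c) = fst c + s^2" by (simp add: c2_def)
  ultimately have t: "fst z0 < fst (c2 s c)" using zz0(2) hz(1) zero_le_power2[of s] by linarith
  have "krho z0 (c2 s c) \<le> krho z0 z + krho z (c2 s c)" by (rule krho_triangle)
  also have "krho z (c2 s c) \<le> krho z c + krho c (c2 s c)" by (rule krho_triangle)
  finally have "krho z0 (c2 s c) \<le> 2 * krho z z0 + krho z c + s"
    using krho_sym[of z0 z] krho_c2[of s c] s by linarith
  then have "krho z0 (c2 s c) < R + 3 * s" using k1 hz(2) r by linarith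
  then show ?thesis using t unfolding kcyl_alt[OF p] by simp
qed

lemma continuous_krho_swap: "continuous_on UNIV (\<lambda>p. krho (snd p) (fst p))"
  unfolding krho_alt by (intro continuous_intros)

lemma kcyl_pair_sets:
  assumes r: "r > 0"
  shows "{p :: 'd::finite kpoint \<times> 'd kpoint. snd p \<in> kcyl r (fst p)} \<in> sets (lborel \<Otimes>\<^sub>M lborel)"
proof -
  have "{p :: 'd::finite kpoint \<times> 'd kpoint. snd p \<in> kcyl r (fst p)} =
      {p. fst (snd p) < fst (fst p) \<and> krho (snd p) (fst p) < r}"
    unfolding kcyl_alt[OF r] by auto
  moreover have "open {p :: 'd::finite kpoint \<times> 'd kpoint. fst (snd p) < fst (fst p) \<and> krho (snd p) (fst p) < r}"
    by (intro open_Collect_conj open_Collect_less continuous_intros continuous_krho_swap[THEN continuous_on_subset]) auto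
  ultimately show ?thesis unfolding lborel_prod by simp
qed

context kcamp
begin

lemma AE_cyl:
  fixes g' :: "'d kpoint \<Rightarrow> real"
  assumes gm: "g' \<in> borel_measurable lborel"
    and gae: "AE z in lborel. indicator (kdom T) z * u z = g' z"
    and R: "R > 0" and s: "s > 0" and cT: "ereal (fst c + s^2) < T"
  shows "AE z in lborel. z \<in> kcyl R c \<longrightarrow> w z = g' z"
proof -
  define G where "G z = indicator (kdom T) z * ennreal ((g' z - indicator (kdom T) z * w z)^2)" for z
  have Wm: "(\<lambda>z. indicator (kdom T) z * w z) \<in> borel_measurable lborel" using W_meas by simp
  have kd[measurable]: "kdom T \<in> sets lborel" using borel_open[OF open_kdom] by simp
  have Gm[measurable]: "G \<in> borel_measurable lborel" unfolding G_def using gm Wm by measurable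
  define A where "A = kcyl R c"
  define c' where "c' = c2 s c"
  define B where "B = kcyl (R + 3 * s) c'"
  define \<kappa> where "\<kappa> = kap TYPE('d)"
  define D where "D = kdim TYPE('d)"
  have \<kappa>: "\<kappa> > 0" unfolding \<kappa>_def by (rule kap_pos)
  have c'k: "c' \<in> kdom T" using cT unfolding c'_def c2_def kdom_def by simp
  have Bsub: "B \<subseteq> kdom T" unfolding B_def using c'k closure_subset by (intro kcyl_sub_kdom) blast
  have ck: "c \<in> kdom T" unfolding kdom_def mem_Collect_eq
  proof -
    have "fst c < fst c + s^2" using s by simp
    then have "ereal (fst c) < ereal (fst c + s^2)" by simp
    then show "ereal (fst c) < T" using cT by (rule order_less_trans)
  qed
  have Asub: "A \<subseteq> kdom T" unfolding A_def using ck closure_subset by (intro kcyl_sub_kdom) blast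
  have RB: "R + 3 * s > 0" using R s by simp
  have EB: "emeasure lborel B = ennreal (\<kappa> * (R + 3 * s) ^ D)"
    unfolding B_def \<kappa>_def D_def kap_def kdim_def by (rule emeasure_kcyl[OF RB])
  have [measurable]: "A \<in> sets lborel" "B \<in> sets lborel" unfolding A_def B_def by (rule kcyl_sets)+
  define X where "X = (\<integral>\<^sup>+z. indicator A z * G z \<partial>lborel)"
  have main: "X * ennreal (\<kappa> * (r/8) ^ D) \<le> ennreal (K5 * (k * r powr \<alpha>)^2 * (\<kappa> * r ^ D)) * ennreal (\<kappa> * (R + 3 * s) ^ D)"
    if r: "0 < r" "r \<le> s" for r
  proof -
    have inner: "(\<integral>\<^sup>+z. indicator (kcyl r z0) z * G z \<partial>lborel) \<le> ennreal (K5 * (k * r powr \<alpha>)^2 * (\<kappa> * r ^ D))"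
      if z0: "z0 \<in> B" for z0
    proof -
      have z0k: "z0 \<in> kdom T" using z0 Bsub by blast
      have csub: "kcyl r z0 \<subseteq> kdom T" using z0k closure_subset by (intro kcyl_sub_kdom) blast
      have "(\<integral>\<^sup>+z. indicator (kcyl r z0) z * G z \<partial>lborel) = (\<integral>\<^sup>+z. indicator (kcyl r z0) z * G z \<partial>lebesgue)"
        by (simp add: nn_integral_completion)
      also have "\<dots> = (\<integral>\<^sup>+z. indicator (kcyl r z0) z * ennreal ((u z - w z)^2) \<partial>lebesgue)"
      proof (rule nn_integral_cong_AE)
        have "AE z in lebesgue. indicator (kdom T) z * u z = g' z" by (rule AE_completion[OF gae])
        then show "AE z in lebesgue. indicator (kcyl r z0) z * G z = indicator (kcyl r z0) z * ennreal ((u z - w z)^2)"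
        proof eventually_elim
          case (elim z)
          show ?case
          proof (cases "z \<in> kcyl r z0")
            case True
            then have "z \<in> kdom T" using csub by blast
            then show ?thesis using True elim by (simp add: G_def)
          qed simp
        qed
      qed
      also have "\<dots> \<le> ennreal (K5 * (k * r powr \<alpha>)^2 * (\<kappa> * r ^ D))"
        unfolding \<kappa>_def D_def by (rule I_bound[OF z0k r(1)])
      finally show ?thesis .
    qed
    define f where "f z0 z = indicator B z0 * (indicator (kcyl r z0) z * G z)" for z0 z
    have S[measurable]: "{p :: 'd kpoint \<times> 'd kpoint. snd p \<in> kcyl r (fst p)} \<in> sets (lborel \<Otimes>\<^sub>M lborel)"
      by (rule kcyl_pair_sets[OF r(1)])
    have fm: "case_prod f \<in> borel_measurable (lborel \<Otimes>\<^sub>M lborel)"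
    proof -
      have "case_prod f = (\<lambda>p. indicator B (fst p) * (indicator {p :: 'd kpoint \<times> 'd kpoint. snd p \<in> kcyl r (fst p)} p * G (snd p)))"
        by (auto simp: f_def indicator_def fun_eq_iff)
      then show ?thesis by simp
    qed
    have "(\<integral>\<^sup>+z0. (\<integral>\<^sup>+z. f z0 z \<partial>lborel) \<partial>lborel)
        \<le> (\<integral>\<^sup>+z0. ennreal (K5 * (k * r powr \<alpha>)^2 * (\<kappa> * r ^ D)) * indicator B z0 \<partial>lborel)"
    proof (intro nn_integral_mono)
      fix z0
      show "(\<integral>\<^sup>+z. f z0 z \<partial>lborel) \<le> ennreal (K5 * (k * r powr \<alpha>)^2 * (\<kappa> * r ^ D)) * indicator B z0"
      proof (cases "z0 \<in> B")
        case True
        then show ?thesis using inner[OF True] by (simp add: f_def)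
      qed (simp add: f_def)
    qed
    also have "\<dots> = ennreal (K5 * (k * r powr \<alpha>)^2 * (\<kappa> * r ^ D)) * emeasure lborel B"
      by (rule nn_integral_cmult_indicator) (simp add: B_def borel_open[OF open_kcyl])
    finally have up: "(\<integral>\<^sup>+z0. (\<integral>\<^sup>+z. f z0 z \<partial>lborel) \<partial>lborel)
        \<le> ennreal (K5 * (k * r powr \<alpha>)^2 * (\<kappa> * r ^ D)) * ennreal (\<kappa> * (R + 3 * s) ^ D)"
      unfolding EB .
    have fub: "(\<integral>\<^sup>+z. (\<integral>\<^sup>+z0. f z0 z \<partial>lborel) \<partial>lborel) = (\<integral>\<^sup>+z0. (\<integral>\<^sup>+z. f z0 z \<partial>lborel) \<partial>lborel)"
      by (rule lborel_pair.Fubini'[OF fm])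
    have r8: "r / 8 > 0" using r by simp
    have "X * ennreal (\<kappa> * (r/8) ^ D) = (\<integral>\<^sup>+z. indicator A z * G z * ennreal (\<kappa> * (r/8) ^ D) \<partial>lborel)"
      unfolding X_def by (rule nn_integral_multc[symmetric]) simp
    also have "\<dots> \<le> (\<integral>\<^sup>+z. (\<integral>\<^sup>+z0. f z0 z \<partial>lborel) \<partial>lborel)"
    proof (intro nn_integral_mono)
      fix z
      show "indicator A z * G z * ennreal (\<kappa> * (r/8) ^ D) \<le> (\<integral>\<^sup>+z0. f z0 z \<partial>lborel)"
      proof (cases "z \<in> A")
        case True
        have "(\<integral>\<^sup>+z0. G z * indicator (kcyl (r/8) (zs r z)) z0 \<partial>lborel) \<le> (\<integral>\<^sup>+z0. f z0 z \<partial>lborel)"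
        proof (intro nn_integral_mono)
          fix z0
          show "G z * indicator (kcyl (r/8) (zs r z)) z0 \<le> f z0 z"
          proof (cases "z0 \<in> kcyl (r/8) (zs r z)")
            case True2: True
            have "z \<in> kcyl r z0" using zs_in(1)[OF r(1) True2] .
            moreover have "z0 \<in> B" unfolding B_def c'_def
              using zs_inB[OF R r, of z c z0] True True2 unfolding A_def by simp
            ultimately show ?thesis using True2 by (simp add: f_def)
          qed simp
        qed
        moreover have "(\<integral>\<^sup>+z0. G z * indicator (kcyl (r/8) (zs r z)) z0 \<partial>lborel) = G z * ennreal (\<kappa> * (r/8) ^ D)"
          using emeasure_kcyl[OF r8, of "zs r z"] unfolding \<kappa>_def D_def kap_def kdim_def
          by (subst nn_integral_cmult_indicator) (auto simp: borel_open[OF open_kcyl])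
        ultimately show ?thesis using True by simp
      qed simp
    qed
    also have "\<dots> \<le> ennreal (K5 * (k * r powr \<alpha>)^2 * (\<kappa> * r ^ D)) * ennreal (\<kappa> * (R + 3 * s) ^ D)"
      using fub up by simp
    finally show ?thesis .
  qed
  define Kc where "Kc = K5 * 8 ^ D * (\<kappa> * (R + 3 * s) ^ D)"
  have K5: "K5 \<ge> 0" unfolding K5_def by simp
  have Kc0: "Kc \<ge> 0" unfolding Kc_def using K5 \<kappa> RB by simp
  have Xb: "X \<le> ennreal (Kc * (k * r powr \<alpha>)^2)" if r: "0 < r" "r \<le> s" for r
  proof -
    define a where "a = \<kappa> * (r/8) ^ D"
    have a: "a > 0" unfolding a_def using \<kappa> r by simp
    have eq: "K5 * (k * r powr \<alpha>)^2 * (\<kappa> * r ^ D) * (\<kappa> * (R + 3 * s) ^ D) = Kc * (k * r powr \<alpha>)^2 * a"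
      unfolding Kc_def a_def by (simp add: power_divide)
    have m: "X * ennreal a \<le> ennreal (Kc * (k * r powr \<alpha>)^2 * a)"
      using main[OF r] unfolding a_def[symmetric] eq[symmetric]
      using K5 \<kappa> RB r by (simp add: ennreal_mult'')
    show ?thesis
    proof (cases X)
      case (real x)
      then have "ennreal (x * a) \<le> ennreal (Kc * (k * r powr \<alpha>)^2 * a)" using m a by (simp add: ennreal_mult'')
      then have "x * a \<le> Kc * (k * r powr \<alpha>)^2 * a" using Kc0 a by (subst (asm) ennreal_le_iff) auto
      then have "x \<le> Kc * (k * r powr \<alpha>)^2" using a by simp
      then show ?thesis using real by (simp add: ennreal_leI)
    next
      case top
      then show ?thesis using m a by (simp add: ennreal_mult_top top_unique)
    qed
  qed
  have X0: "X = 0"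
  proof -
    have Xfin: "X \<le> ennreal (Kc * (k * s powr \<alpha>)^2)" using Xb[OF s] by simp
    then obtain x where x: "X = ennreal x" "x \<ge> 0" by (cases X) (auto simp: top_unique)
    define rn where "rn n = s * (1/2)^n" for n :: nat
    have rn: "0 < rn n" "rn n \<le> s" for n unfolding rn_def using s by (auto simp: power_le_one mult_left_le)
    have xb: "x \<le> Kc * (k * rn n powr \<alpha>)^2" for n
    proof -
      have "ennreal x \<le> ennreal (Kc * (k * rn n powr \<alpha>)^2)" using Xb[OF rn] x by simp
      then show ?thesis using Kc0 by (subst (asm) ennreal_le_iff) auto
    qed
    have t0: "rn \<longlonglongrightarrow> 0" unfolding rn_def by (intro tendsto_mult_right_zero LIMSEQ_power_zero) simp
    have t1: "(\<lambda>n. rn n powr \<alpha>) \<longlonglongrightarrow> 0"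
      by (rule tendsto_zero_powrI[OF t0 tendsto_const]) (auto simp: a0 less_imp_le[OF rn(1)])
    have t2: "(\<lambda>n. Kc * (k * rn n powr \<alpha>)^2) \<longlonglongrightarrow> Kc * (k * 0)^2"
      by (intro tendsto_intros t1)
    have "x \<le> 0" using LIMSEQ_le_const[OF t2] xb by simp
    then show ?thesis using x by simp
  qed
  have "AE z in lborel. indicator A z * G z = 0"
    using X0 unfolding X_def by (subst (asm) nn_integral_0_iff_AE) auto
  then show ?thesis
  proof eventually_elim
    case (elim z)
    show ?case
    proof
      assume zc: "z \<in> kcyl R c"
      then have zA: "z \<in> A" "z \<in> kdom T" using Asub unfolding A_def by auto
      then have "ennreal ((g' z - w z)^2) = 0" using elim by (simp add: G_def)
      then have "(g' z - w z)^2 \<le> 0" by (simp add: ennreal_eq_0_iff)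
      then show "w z = g' z" by simp
    qed
  qed
qed

end

lemma exists_cyl:
  fixes z :: "'d::finite kpoint"
  assumes z: "z \<in> kdom T"
  shows "\<exists>q n. q \<in> \<rat> \<and> (\<exists>s>0. ereal (q + s^2) < T) \<and> z \<in> kcyl (real n + 1) (q, 0, 0)"
proof -
  obtain t x v where ze: "z = (t,x,v)" by (cases z) auto
  have tT: "ereal t < T" using z unfolding ze kdom_def by simp
  obtain q where q: "q \<in> \<rat>" "t < q" "\<exists>s>0. ereal (q + s^2) < T"
  proof (cases T)
    case (real T')
    have tT': "t < T'" using tT real by simp
    obtain q where q: "q \<in> \<rat>" "t < q" "q < (t + T') / 2" using Rats_dense_in_real[of t "(t + T')/2"] tT' by auto
    define s where "s = sqrt ((T' - q) / 2)"
    have s: "s > 0" "s^2 = (T' - q) / 2" unfolding s_def using q tT' by auto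
    have "ereal (q + s^2) < T" using s q tT' real by simp
    then show ?thesis using that q s by blast
  next
    case PInf
    obtain q where q: "q \<in> \<rat>" "t < q" "q < t + 1" using Rats_dense_in_real[of t "t + 1"] by auto
    have "ereal (q + 1^2) < T" using PInf by simp
    then show ?thesis using that q zero_less_one by blast
  next
    case MInf then show ?thesis using tT by simp
  qed
  define M where "M = max (q - t) (max (norm v) (norm x))"
  obtain n :: nat where n: "M < real n" using reals_Archimedean2 by blast
  define R where "R = real n + 1"
  have R1: "R \<ge> 1" unfolding R_def by simp
  have R0: "R > 0" using R1 by simp
  have MR: "M < R" using n unfolding R_def by simp
  have "R \<le> R^2" using R1 by (simp add: power2_eq_square)
  moreover have "R \<le> R^3" using R1 by (simp add: power3_eq_cube) (metis mult_le_cancel_left1 mult_1_right order_trans one_le_power[of R 2] power2_eq_square R1 less_le_trans zero_less_one not_le mult_left_mono)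
  ultimately have "\<bar>t - q\<bar> < R^2" "norm (x - 0 + (t - q) *\<^sub>R 0) < R^3" "norm (v - 0) < R"
    using MR q(2) unfolding M_def by auto
  then have "krho (t,x,v) (q,0,0) < R" using R0 by (subst krho_less_iff) auto
  then have "z \<in> kcyl R (q,0,0)" using q(2) unfolding ze kcyl_alt[OF R0] by simp
  then show ?thesis using q unfolding R_def by blast
qed

context kcamp
begin

lemma w_ae: "AE z in lebesgue. z \<in> kdom T \<longrightarrow> w z = u z"
proof -
  have um: "(\<lambda>z. indicator (kdom T) z *\<^sub>R u z) \<in> borel_measurable (completion lborel)"
    using L unfolding L2loc_def set_borel_measurable_def by simp
  obtain g' where g'm: "g' \<in> borel_measurable lborel"
    and g'ae: "AE z in lborel. indicator (kdom T) z *\<^sub>R u z = g' z"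
    using completion_ex_borel_measurable_real[OF um] by blast
  have gae: "AE z in lborel. indicator (kdom T) z * u z = g' z" using g'ae by simp
  define I where "I = {p :: real \<times> nat. fst p \<in> \<rat> \<and> (\<exists>s>0. ereal (fst p + s^2) < T)}"
  have cI: "countable I"
  proof -
    have "I \<subseteq> \<rat> \<times> UNIV" unfolding I_def by auto
    moreover have "countable (\<rat> \<times> (UNIV :: nat set))" by (intro countable_SIGMA countable_rat) auto
    ultimately show ?thesis by (rule countable_subset)
  qed
  have "\<forall>p\<in>I. AE z in lborel. z \<in> kcyl (real (snd p) + 1) (fst p, 0, 0) \<longrightarrow> w z = g' z"
  proof
    fix p assume p: "p \<in> I"
    then obtain s where s: "s > 0" "ereal (fst p + s^2) < T" unfolding I_def by auto
    show "AE z in lborel. z \<in> kcyl (real (snd p) + 1) (fst p, 0, 0) \<longrightarrow> w z = g' z"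
      by (rule AE_cyl[OF g'm gae _ s(1)]) (use s(2) in auto)
  qed
  then have "AE z in lborel. \<forall>p\<in>I. z \<in> kcyl (real (snd p) + 1) (fst p, 0, 0) \<longrightarrow> w z = g' z"
    by (rule AE_ball_countable[OF cI, THEN iffD2])
  then have "AE z in lborel. z \<in> kdom T \<longrightarrow> w z = u z"
    using gae
  proof eventually_elim
    case (elim z)
    show ?case
    proof
      assume zk: "z \<in> kdom T"
      obtain q n where qn: "q \<in> \<rat>" "\<exists>s>0. ereal (q + s^2) < T" "z \<in> kcyl (real n + 1) (q, 0, 0)"
        using exists_cyl[OF zk] by blast
      have "(q, n) \<in> I" using qn unfolding I_def by simp
      then have "z \<in> kcyl (real (snd (q,n)) + 1) (fst (q,n), 0, 0) \<longrightarrow> w z = g' z" using elim(1) by blast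
      then have "w z = g' z" using qn(3) by simp
      then show "w z = u z" using elim(2) zk by simp
    qed
  qed
  then show ?thesis by (rule AE_completion)
qed

end

definition HC :: "'d::finite itself \<Rightarrow> real \<Rightarrow> real" where
  "HC _ \<alpha> = 6 * sqrt (2 ^ kdim TYPE('d)) * (1 / (1 - 2 powr (-\<alpha>))) + 4 * sqrt (2 ^ kdim TYPE('d))"

lemma HC_pos: assumes "\<alpha> > 0" shows "HC TYPE('d::finite) \<alpha> > 0"
proof -
  have "2 powr (-\<alpha>) < 1" using assms by (simp add: powr_less_one)
  then have "1 / (1 - 2 powr (-\<alpha>)) > 0" by simp
  then show ?thesis unfolding HC_def by (intro add_pos_pos mult_pos_pos) auto
qed

context kcamp
begin

lemma C4_eq: "C4 = HC TYPE('d) \<alpha>"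
  unfolding C4_def C3_def C1_def c0_def S_def HC_def by (simp add: algebra_simps)

end

lemma avg_sq_bound:
  fixes f :: "'a::euclidean_space \<Rightarrow> real"
  assumes A: "A \<in> sets lebesgue" "emeasure lebesgue A < \<infinity>" "measure lebesgue A > 0"
    and i1: "set_integrable lebesgue A f" and i2: "set_integrable lebesgue A (\<lambda>z. (f z)^2)"
    and b: "\<And>y z. y \<in> A \<Longrightarrow> z \<in> A \<Longrightarrow> \<bar>f y - f z\<bar> \<le> b"
  shows "avg A (\<lambda>z. (f z - avg A f)^2) \<le> b^2"
proof -
  define mu where "mu = measure lebesgue A"
  have ic: "set_integrable lebesgue A (\<lambda>z. c)" for c :: real by (rule set_integrable_const_real[OF A(1,2)])
  have dev: "\<bar>f z - avg A f\<bar> \<le> b" if z: "z \<in> A" for z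
  proof -
    have idf: "set_integrable lebesgue A (\<lambda>y. f y - f z)" using set_integral_diff(1)[OF i1 ic] .
    have "(LINT y:A|lebesgue. f y - f z) \<le> (LINT y:A|lebesgue. b)"
    proof (rule set_integral_mono[OF idf ic])
      fix y assume "y \<in> A" then have "\<bar>f y - f z\<bar> \<le> b" by (rule b[OF _ z])
      then show "f y - f z \<le> b" by linarith
    qed
    moreover have "(LINT y:A|lebesgue. - b) \<le> (LINT y:A|lebesgue. f y - f z)"
    proof (rule set_integral_mono[OF ic idf])
      fix y assume "y \<in> A" then have "\<bar>f y - f z\<bar> \<le> b" by (rule b[OF _ z])
      then show "- b \<le> f y - f z" by linarith
    qed
    ultimately have "\<bar>LINT y:A|lebesgue. f y - f z\<bar> \<le> mu * b"
      unfolding set_integral_const_real[OF A(1,2)] mu_def by (simp add: abs_le_iff)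
    moreover have "avg A (\<lambda>y. f y - f z) = avg A f - f z" by (rule avg_shift[OF A i1])
    moreover have "\<bar>avg A (\<lambda>y. f y - f z)\<bar> \<le> b"
    proof -
      have "\<bar>avg A (\<lambda>y. f y - f z)\<bar> = \<bar>LINT y:A|lebesgue. f y - f z\<bar> / mu"
        unfolding avg_def mu_def using A(3) by (simp add: abs_divide)
      also have "\<dots> \<le> b" using \<open>\<bar>LINT y:A|lebesgue. f y - f z\<bar> \<le> mu * b\<close> A(3) unfolding mu_def
        by (simp add: divide_le_eq mult.commute)
      finally show ?thesis .
    qed
    ultimately have "\<bar>avg A f - f z\<bar> \<le> b" by simp
    then show ?thesis by (simp add: abs_minus_commute)
  qed
  have isq: "set_integrable lebesgue A (\<lambda>z. (f z - avg A f)^2)" by (rule set_integrable_sq_shift[OF A(1,2) i1 i2])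
  have "(LINT z:A|lebesgue. (f z - avg A f)^2) \<le> (LINT z:A|lebesgue. b^2)"
  proof (rule set_integral_mono[OF isq ic])
    fix z assume "z \<in> A"
    then have "\<bar>f z - avg A f\<bar> \<le> b" by (rule dev)
    then show "(f z - avg A f)^2 \<le> b^2" by (metis abs_ge_zero order_trans power2_abs power_mono)
  qed
  then have "(LINT z:A|lebesgue. (f z - avg A f)^2) \<le> mu * b^2"
    unfolding set_integral_const_real[OF A(1,2)] mu_def .
  then show ?thesis using A(3) unfolding avg_def mu_def by (simp add: divide_le_eq mult.commute)
qed

lemma campanato_le_holder:
  fixes u :: "'d::finite kpoint \<Rightarrow> real"
  assumes L: "L2loc T u" and a0: "0 < \<alpha>" and a1: "\<alpha> \<le> 1"
    and h: "kholder \<alpha> T u = ennreal h" "h \<ge> 0"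
  shows "kcampanato \<alpha> T u \<le> ennreal (3 powr \<alpha> * h)"
  unfolding kcampanato_def
proof (rule SUP_least, clarify)
  fix r :: real and z0 :: "'d kpoint"
  assume r: "r > 0" and z0: "z0 \<in> closure (kdom T)"
  define Q where "Q = kcyl r z0"
  define b where "b = h * (3 * r) powr \<alpha>"
  have b0: "b \<ge> 0" unfolding b_def using h by simp
  have Qsub: "Q \<subseteq> kdom T" unfolding Q_def by (rule kcyl_sub_kdom[OF z0])
  have Ql: "Q \<in> sets lebesgue" "emeasure lebesgue Q < \<infinity>" unfolding Q_def by (rule kcyl_lsets, rule kcyl_fin)
  have Qm: "measure lebesgue Q = kap TYPE('d) * r ^ kdim TYPE('d)" unfolding Q_def by (rule measure_kcyl(1)[OF r])
  have Qpos: "measure lebesgue Q > 0" unfolding Qm using kap_pos[where 'd='d] r by simp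
  have i1: "set_integrable lebesgue Q u" and i2: "set_integrable lebesgue Q (\<lambda>z. (u z)^2)"
    using L2loc_cyl[OF L z0] unfolding Q_def by auto
  have pair: "\<bar>u y - u z\<bar> \<le> b" if y: "y \<in> Q" and z: "z \<in> Q" for y z
  proof (cases "y = z")
    case True then show ?thesis using b0 by simp
  next
    case False
    have yk: "y \<in> kdom T" and zk: "z \<in> kdom T" using y z Qsub by auto
    have "ennreal (\<bar>u y - u z\<bar> / (krho y z) powr \<alpha>) \<le> kholder \<alpha> T u"
    proof -
      have mem: "(y,z) \<in> {(z, z'). z \<in> kdom T \<and> z' \<in> kdom T \<and> z \<noteq> z'}" using yk zk False by auto
      show ?thesis unfolding kholder_def
        using SUP_upper[OF mem, of "\<lambda>p. ennreal (\<bar>u (fst p) - u (snd p)\<bar> / (krho (fst p) (snd p)) powr \<alpha>)"] by simp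
    qed
    then have q: "\<bar>u y - u z\<bar> / (krho y z) powr \<alpha> \<le> h" using h by (simp add: ennreal_le_iff)
    have pos: "krho y z > 0" using False krho_nonneg[of y z] krho_eq0[of y z] by linarith
    have "krho y z \<le> krho y z0 + krho z0 z" by (rule krho_triangle)
    moreover have "krho y z0 < r" "krho z z0 < r" using y z unfolding Q_def kcyl_alt[OF r] by auto
    ultimately have "krho y z < 3 * r" using krho_sym[of z0 z] by linarith
    then have "(krho y z) powr \<alpha> \<le> (3 * r) powr \<alpha>" using pos a0 by (intro powr_mono2) auto
    moreover have "\<bar>u y - u z\<bar> \<le> h * (krho y z) powr \<alpha>" using q pos by (simp add: divide_le_eq)
    ultimately show ?thesis unfolding b_def using h(2) by (meson mult_left_mono order_trans)
  qed
  have av: "avg Q (\<lambda>z. (u z - avg Q u)^2) \<le> b^2" by (rule avg_sq_bound[OF Ql Qpos i1 i2 pair])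
  have "sqrt (avg Q (\<lambda>z. (u z - avg Q u)^2)) \<le> b"
    using real_sqrt_le_mono[OF av] b0 by simp
  then have "r powr (- \<alpha>) * sqrt (avg Q (\<lambda>z. (u z - avg Q u)^2)) \<le> r powr (- \<alpha>) * b"
    by (intro mult_left_mono) auto
  also have "r powr (- \<alpha>) * b = 3 powr \<alpha> * h"
    unfolding b_def using r by (simp add: powr_mult powr_minus field_simps)
  finally show "ennreal (fst (r, z0) powr - \<alpha> * sqrt (avg (kcyl (fst (r, z0)) (snd (r, z0)))
        (\<lambda>z. (u z - avg (kcyl (fst (r, z0)) (snd (r, z0))) u)\<^sup>2))) \<le> ennreal (3 powr \<alpha> * h)"
    unfolding Q_def by (simp add: ennreal_leI)
qed

theorem lemma2p1:
  fixes \<alpha> :: real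
  assumes "0 < \<alpha>" and "\<alpha> \<le> 1"
  shows "\<exists>N>0. \<forall>(T::ereal) (u :: 'd::finite kpoint \<Rightarrow> real).
           T \<noteq> -\<infinity> \<longrightarrow> L2loc T u \<longrightarrow> kcampanato \<alpha> T u < \<infinity> \<longrightarrow>
             (\<exists>w. (AE z in lebesgue. z \<in> kdom T \<longrightarrow> w z = u z) \<and>
                  ennreal N * kholder \<alpha> T w \<le> kcampanato \<alpha> T u) \<and>
             kcampanato \<alpha> T u \<le> ennreal (1 / N) * kholder \<alpha> T u"
proof -
  define H where "H = HC TYPE('d) \<alpha>"
  have H: "H > 0" unfolding H_def by (rule HC_pos[OF assms(1)])
  define N where "N = 1 / (H + 3 powr \<alpha>)"
  have Hp: "H + 3 powr \<alpha> > 0" using H by (simp add: add_pos_pos)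
  have N: "N > 0" unfolding N_def using Hp by simp
  have NH: "N * H \<le> 1" unfolding N_def using Hp H by (simp add: field_simps)
  have N1: "1 / N = H + 3 powr \<alpha>" unfolding N_def by simp
  show ?thesis
  proof (intro exI[of _ N] conjI allI impI N)
    fix T :: ereal and u :: "'d kpoint \<Rightarrow> real"
    assume L: "L2loc T u" and fin: "kcampanato \<alpha> T u < \<infinity>"
    define k where "k = enn2real (kcampanato \<alpha> T u)"
    have kc: "kcampanato \<alpha> T u = ennreal k" unfolding k_def using fin by (simp add: less_top)
    have k0: "k \<ge> 0" unfolding k_def by simp
    have camp: "avg (kcyl r z0) (\<lambda>z. (u z - avg (kcyl r z0) u)^2) \<le> (k * r powr \<alpha>)^2"
      if r: "r > 0" and z0: "z0 \<in> closure (kdom T)" for r z0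
    proof -
      define a where "a = avg (kcyl r z0) (\<lambda>z. (u z - avg (kcyl r z0) u)^2)"
      have "ennreal (r powr (- \<alpha>) * sqrt a) \<le> kcampanato \<alpha> T u"
      proof -
        have mem: "(r, z0) \<in> {(r, z0). r > 0 \<and> z0 \<in> closure (kdom T)}" using r z0 by simp
        show ?thesis unfolding kcampanato_def a_def
          using SUP_upper[OF mem, of "\<lambda>p. ennreal (fst p powr (- \<alpha>) *
            sqrt (avg (kcyl (fst p) (snd p)) (\<lambda>z. (u z - avg (kcyl (fst p) (snd p)) u)^2)))"] by simp
      qed
      then have "r powr (- \<alpha>) * sqrt a \<le> k" unfolding kc using k0 by (simp add: ennreal_le_iff)
      then have "sqrt a \<le> k * r powr \<alpha>" using r by (simp add: powr_minus field_simps)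
      then show ?thesis
      proof (cases "a \<ge> 0")
        case True
        then show ?thesis using \<open>sqrt a \<le> k * r powr \<alpha>\<close> unfolding a_def[symmetric]
          by (metis real_sqrt_ge_zero real_sqrt_pow2 power_mono)
      next
        case False then show ?thesis unfolding a_def[symmetric] by (smt (verit) zero_le_power2)
      qed
    qed
    interpret K: kcamp T u k \<alpha>
      using L k0 assms camp by unfold_locales auto
    show "\<exists>w. (AE z in lebesgue. z \<in> kdom T \<longrightarrow> w z = u z) \<and> ennreal N * kholder \<alpha> T w \<le> kcampanato \<alpha> T u"
    proof -
      have ae: "AE z in lebesgue. z \<in> kdom T \<longrightarrow> K.w z = u z" by (rule K.w_ae)
      have "kholder \<alpha> T K.w \<le> ennreal (H * k)"
        unfolding kholder_def
      proof (rule SUP_least)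
        fix p :: "'d kpoint \<times> 'd kpoint" assume p: "p \<in> {(z, z'). z \<in> kdom T \<and> z' \<in> kdom T \<and> z \<noteq> z'}"
        obtain z z' where pe: "p = (z, z')" by (cases p) auto
        have z: "z \<in> kdom T" and z': "z' \<in> kdom T" and ne: "z \<noteq> z'" using p pe by auto
        have zc: "z \<in> closure (kdom T)" "z' \<in> closure (kdom T)" using z z' closure_subset by auto
        have pos: "krho z z' > 0" using ne krho_nonneg[of z z'] krho_eq0[of z z'] by linarith
        have "\<bar>K.w z - K.w z'\<bar> \<le> H * (k * (krho z z') powr \<alpha>)"
          using K.w_holder[OF zc] unfolding K.C4_eq H_def .
        then have "\<bar>K.w z - K.w z'\<bar> / (krho z z') powr \<alpha> \<le> H * k"
          using pos by (simp add: divide_le_eq)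
        then show "ennreal (\<bar>K.w (fst p) - K.w (snd p)\<bar> / krho (fst p) (snd p) powr \<alpha>)
            \<le> ennreal (H * k)" unfolding pe by (simp add: ennreal_leI)
      qed
      then have "ennreal N * kholder \<alpha> T K.w \<le> ennreal N * ennreal (H * k)" by (rule mult_left_mono) simp
      also have "\<dots> = ennreal (N * H * k)" using ennreal_mult[of N "H * k"] N H k0 by (simp add: mult.assoc)
      also have "\<dots> \<le> ennreal k" using mult_right_mono[OF NH k0] by (intro ennreal_leI) simp
      finally have "ennreal N * kholder \<alpha> T K.w \<le> kcampanato \<alpha> T u" unfolding kc .
      then show ?thesis using ae by blast
    qed
    show "kcampanato \<alpha> T u \<le> ennreal (1 / N) * kholder \<alpha> T u"
    proof (cases "kholder \<alpha> T u")
      case (real h)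
      have "kcampanato \<alpha> T u \<le> ennreal (3 powr \<alpha> * h)"
        by (rule campanato_le_holder[OF L assms real(2) real(1)])
      also have "\<dots> \<le> ennreal ((1 / N) * h)" unfolding N1 using real H
        by (intro ennreal_leI mult_right_mono) auto
      also have "\<dots> = ennreal (1 / N) * kholder \<alpha> T u" using real ennreal_mult[of "1 / N" h] N by simp
      finally show ?thesis .
    next
      case top
      then show ?thesis using N by (simp add: ennreal_mult_top)
    qed
  qed
qed

end
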